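(* Let $\beta\in(0,1)$ and $1\le p<n/\beta$. Then the following statements are equivalent. 1. For all $f\in C_0^\infty(\mathbb{R}^n)$: $$\left(\int_0^\infty V(O_t(f))^{\frac{n-p\beta}{n}}\,d(t^p)\right)^{1/p}\lesssim\|f\|_{\dot{\Lambda}^{p,p}_\beta(\mathbb{R}^n)}.$$ 2. For all $f\in C_0^\infty(\mathbb{R}^n)$: $$\left(\int_{\mathbb{R}^n}|f(x)|^{\frac{np}{n-p\beta}}dx\right)^{\frac{n-p\beta}{np}}\lesssim\|f\|_{\dot{\Lambda}^{p,p}_\beta(\mathbb{R}^n)}.$$ 3. For all $f\in C_0^\infty(\mathbb{R}^n)$: $$\left(\int_{\mathbb{R}^n}\frac{|f(x)|^p}{|x|^{p\beta}}dx\right)^{1/p}\lesssim\|f\|_{\dot{\Lambda}^{p,p}_\beta(\mathbb{R}^n)}.$$ 4. For every bounded domain $O\subset\mathbb{R}^n$ with $C^\infty$ boundary: $$V(O)^{\frac{n-p\beta}{n}}\lesssim C^{p,p}_\beta(\overline{O}).$$ Moreover, all four inequalities hold.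
   Context: $C_0^\infty(\mathbb{R}^n)$ is the space of compactly supported smooth functions, $V$ is Lebesgue measure on $\mathbb{R}^n$, $O_t(f)=\{x:|f(x)|>t\}$, and $1_E$ is the characteristic function of $E$. Implicit constants are independent of $f$ and $O$. Besov norm: let $k=1+\lfloor\beta\rfloor$, $\Delta^1_h f(x)=f(x+h)-f(x)$ and $\Delta^k_h=\Delta^1_h\Delta^{k-1}_h$. Then $$\|f\|_{\dot{\Lambda}^{p,q}_\beta(\mathbb{R}^n)}=\left(\int_{\mathbb{R}^n}\|\Delta^k_h f\|_{L^p}^q|h|^{-(n+\beta q)}dh\right)^{1/q}.$$ Besov capacity: for compact $K$, $$C^{p,q}_\beta(K)=\inf\{\|f\|^p_{\dot{\Lambda}^{p,q}_\beta}: f\in C_0^\infty(\mathbb{R}^n),\ f\ge 1_K\}.$$ For arbitrary $E$, $$C^{p,q}_\beta(E)=\inf_{O\supseteq E\text{ open}}\sup_{K\subseteq O\text{ compact}}C^{p,q}_\beta(K).$$ *)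

theory Defs
  imports "HOL-Analysis.Analysis"
begin

text \<open>Real power of an extended nonnegative real, for positive exponents
  (infinity stays infinity).\<close>
definition ennpow :: "ennreal \<Rightarrow> real \<Rightarrow> ennreal" where
  "ennpow x a = (if x = \<infinity> then \<infinity> else ennreal (enn2real x powr a))"

fun Ck :: "nat \<Rightarrow> ('a::euclidean_space \<Rightarrow> real) \<Rightarrow> bool" where
  "Ck 0 f = continuous_on UNIV f"
| "Ck (Suc k) f = ((\<forall>x. f differentiable (at x)) \<and>
      (\<forall>v. Ck k (\<lambda>x. frechet_derivative f (at x) v)))"

definition smooth :: "('a::euclidean_space \<Rightarrow> real) \<Rightarrow> bool" where
  "smooth f = (\<forall>k. Ck k f)"

definition C0inf :: "('a::euclidean_space \<Rightarrow> real) set" where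
  "C0inf = {f. smooth f \<and> compact (closure {x. f x \<noteq> 0})}"

fun fdiff :: "nat \<Rightarrow> 'a::euclidean_space \<Rightarrow> ('a \<Rightarrow> real) \<Rightarrow> 'a \<Rightarrow> real" where
  "fdiff 0 h f = f"
| "fdiff (Suc k) h f = (\<lambda>x. fdiff k h f (x + h) - fdiff k h f x)"

definition Lp_norm :: "real \<Rightarrow> ('a::euclidean_space \<Rightarrow> real) \<Rightarrow> ennreal" where
  "Lp_norm p g = ennpow (\<integral>\<^sup>+ x. ennreal (\<bar>g x\<bar> powr p) \<partial>lborel) (1 / p)"

definition besov_norm :: "real \<Rightarrow> real \<Rightarrow> real \<Rightarrow> ('a::euclidean_space \<Rightarrow> real) \<Rightarrow> ennreal" where
  "besov_norm p q \<beta> f = ennpow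
     (\<integral>\<^sup>+ h. ennpow (Lp_norm p (fdiff (nat (1 + \<lfloor>\<beta>\<rfloor>)) h f)) q
               * ennreal (norm h powr (- (real DIM('a) + \<beta> * q))) \<partial>lborel) (1 / q)"

definition besov_cap_compact :: "real \<Rightarrow> real \<Rightarrow> real \<Rightarrow> 'a::euclidean_space set \<Rightarrow> ennreal" where
  "besov_cap_compact p q \<beta> K =
     (INF f \<in> {f \<in> C0inf. \<forall>x. indicator K x \<le> f x}. ennpow (besov_norm p q \<beta> f) p)"

definition besov_cap :: "real \<Rightarrow> real \<Rightarrow> real \<Rightarrow> 'a::euclidean_space set \<Rightarrow> ennreal" where
  "besov_cap p q \<beta> E =
     (INF W \<in> {W. open W \<and> E \<subseteq> W}. SUP K \<in> {K. compact K \<and> K \<subseteq> W}. besov_cap_compact p q \<beta> K)"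

definition smooth_bounded_domain :: "'a::euclidean_space set \<Rightarrow> bool" where
  "smooth_bounded_domain D =
     (D \<noteq> {} \<and> open D \<and> connected D \<and> bounded D \<and>
      (\<forall>x \<in> frontier D. \<exists>U \<rho>. open U \<and> x \<in> U \<and> smooth \<rho> \<and>
          D \<inter> U = {y \<in> U. \<rho> y < 0} \<and>
          (\<forall>y \<in> U. \<rho> y = 0 \<longrightarrow> frechet_derivative \<rho> (at y) \<noteq> (\<lambda>v. 0))))"

definition Ot :: "real \<Rightarrow> ('a \<Rightarrow> real) \<Rightarrow> 'a set" where
  "Ot t f = {x. \<bar>f x\<bar> > t}"

end

theory Submission
  imports Defs
begin

lemma seq_shift:
  fixes Q :: "int \<Rightarrow> real"
  assumes "L \<le> U"
  shows "(\<Sum>k\<in>{L..U}. Q (k-1)) + Q U = Q (L-1) + (\<Sum>k\<in>{L..U}. Q k)"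
  using assms
proof (induction U rule: int_ge_induct)
  case base
  then show ?case by simp
next
  case (step i)
  have e: "{L..i+1} = insert (i+1) {L..i}" using step by auto
  show ?case unfolding e using step by simp
qed

lemma seq_lemma:
  fixes a :: "int \<Rightarrow> real" and T \<delta> \<sigma> :: real
  assumes a0: "\<And>k. 0 \<le> a k" and amono: "\<And>k. a (k+1) \<le> a k" and T: "T > 0"
    and \<delta>: "0 < \<delta>" and \<sigma>: "0 < \<sigma>" "\<sigma> < 1" and Td: "T * \<delta> powr (1-\<sigma>) \<le> 1/2" and LU: "L \<le> U"
  shows "(\<Sum>k\<in>{L..U}. T powr k * a (k+1) powr (1-\<sigma>))
     \<le> 2 * \<delta> powr (-\<sigma>) * (\<Sum>k\<in>{L..U}. T powr k * a (k+1) * a k powr (-\<sigma>))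
       + T powr (L-1) * a L powr (1-\<sigma>)"
proof -
  define Q where "Q k = T powr k * a (k+1) powr (1-\<sigma>)" for k
  define R where "R k = T powr k * a (k+1) * a k powr (-\<sigma>)" for k
  have Q0: "Q k \<ge> 0" for k unfolding Q_def by simp
  have key: "Q k \<le> \<delta> powr (-\<sigma>) * R k + Q (k-1) / 2" for k
  proof -
    have R0: "R k \<ge> 0" unfolding R_def using a0 by simp
    have Qm0: "Q (k-1) \<ge> 0" by (rule Q0)
    consider "a (k+1) = 0" | "a (k+1) > 0" "a (k+1) \<ge> \<delta> * a k" | "a (k+1) > 0" "a (k+1) < \<delta> * a k"
      using a0[of "k+1"] by linarith
    then show ?thesis
    proof cases
      case 1
      then have "Q k = 0" unfolding Q_def by simp
      then show ?thesis using R0 Qm0 by simp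
    next
      case 2
      have ak: "a k > 0" using 2 amono[of k] by linarith
      have "a (k+1) powr (1-\<sigma>) = a (k+1) * a (k+1) powr (-\<sigma>)"
        using 2 by (simp add: powr_diff powr_minus field_simps)
      also have "a (k+1) powr (-\<sigma>) \<le> (\<delta> * a k) powr (-\<sigma>)"
        using 2 ak \<delta> \<sigma> by (intro powr_mono2') auto
      also have "(\<delta> * a k) powr (-\<sigma>) = \<delta> powr (-\<sigma>) * a k powr (-\<sigma>)"
        using ak \<delta> by (simp add: powr_mult)
      finally have "a (k+1) powr (1-\<sigma>) \<le> \<delta> powr (-\<sigma>) * (a (k+1) * a k powr (-\<sigma>))"
        using 2 by (simp add: mult_left_mono mult.assoc mult.left_commute)
      then have "Q k \<le> \<delta> powr (-\<sigma>) * R k"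
        unfolding Q_def R_def using T by (simp add: mult_left_mono mult.assoc mult.left_commute)
      then show ?thesis using Qm0 by simp
    next
      case 3
      have ak: "a k > 0" using 3 amono[of k] by linarith
      have "a (k+1) powr (1-\<sigma>) \<le> (\<delta> * a k) powr (1-\<sigma>)"
        using 3 \<sigma> by (intro powr_mono2) auto
      also have "\<dots> = \<delta> powr (1-\<sigma>) * a k powr (1-\<sigma>)"
        using ak \<delta> by (simp add: powr_mult)
      finally have 1: "a (k+1) powr (1-\<sigma>) \<le> \<delta> powr (1-\<sigma>) * a k powr (1-\<sigma>)" .
      have "Q k \<le> T powr k * (\<delta> powr (1-\<sigma>) * a k powr (1-\<sigma>))"
        unfolding Q_def using 1 T by (intro mult_left_mono) auto
      also have "\<dots> = (T * \<delta> powr (1-\<sigma>)) * (T powr (k-1) * a k powr (1-\<sigma>))"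
        using T by (simp add: powr_diff field_simps)
      also have "\<dots> \<le> (1/2) * (T powr (k-1) * a k powr (1-\<sigma>))"
        using Td by (intro mult_right_mono) auto
      also have "T powr (k-1) * a k powr (1-\<sigma>) = Q (k-1)" unfolding Q_def by simp
      finally have "Q k \<le> Q (k-1) / 2" by simp
      moreover have "\<delta> powr (-\<sigma>) * R k \<ge> 0" using R0 by simp
      ultimately show ?thesis by linarith
    qed
  qed
  have "(\<Sum>k\<in>{L..U}. Q k) \<le> (\<Sum>k\<in>{L..U}. \<delta> powr (-\<sigma>) * R k + Q (k-1) / 2)"
    by (intro sum_mono key)
  also have "\<dots> = \<delta> powr (-\<sigma>) * (\<Sum>k\<in>{L..U}. R k) + (\<Sum>k\<in>{L..U}. Q (k-1)) / 2"
    by (simp add: sum.distrib sum_distrib_left sum_divide_distrib)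
  also have "(\<Sum>k\<in>{L..U}. Q (k-1)) \<le> Q (L-1) + (\<Sum>k\<in>{L..U}. Q k)"
    using seq_shift[OF LU, of Q] Q0[of U] by linarith
  finally have "(\<Sum>k\<in>{L..U}. Q k) \<le> \<delta> powr (-\<sigma>) * (\<Sum>k\<in>{L..U}. R k) + (Q (L-1) + (\<Sum>k\<in>{L..U}. Q k)) / 2"
    by simp
  then show ?thesis unfolding Q_def R_def by (simp add: field_simps)
qed

definition trunc :: "int \<Rightarrow> real \<Rightarrow> real" where
  "trunc k s = min (max (s - 2 powr k) 0) (2 powr k)"

lemma trunc_tele:
  assumes "L - 1 \<le> U"
  shows "(\<Sum>k\<in>{L..U}. trunc k s) = min (max s (2 powr L)) (2 powr (U+1)) - 2 powr L"
  using assms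
proof (induction U rule: int_ge_induct)
  case base
  then show ?case by simp
next
  case (step i)
  have e: "{L..i+1} = insert (i+1) {L..i}" using step by auto
  have le: "2 powr L \<le> 2 powr (i+1)" using step by simp
  have d: "2 powr (real_of_int (i+1+1)) = 2 * 2 powr (real_of_int (i+1))"
    by (simp add: powr_add)
  have gen: "min (max (s - P) 0) P + (min (max s Lp) P - Lp) = min (max s Lp) (2*P) - Lp"
    if "Lp \<le> P" "0 < Lp" for P Lp :: real using that by (auto simp: min_def max_def)
  have "(\<Sum>k\<in>{L..i+1}. trunc k s) = trunc (i+1) s + (min (max s (2 powr L)) (2 powr (i+1)) - 2 powr L)"
    unfolding e using step by simp
  also have "\<dots> = min (max s (2 powr L)) (2 powr (i+1+1)) - 2 powr L"
    unfolding trunc_def d by (rule gen[OF le]) simp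
  finally show ?case by (simp add: add.commute)
qed

lemma trunc_mono: "a \<le> b \<Longrightarrow> trunc k a \<le> trunc k b"
  by (auto simp: trunc_def)

lemma sum_powr_le:
  fixes x :: "'i \<Rightarrow> real"
  assumes "finite I" "\<And>i. i \<in> I \<Longrightarrow> 0 \<le> x i" "1 \<le> p"
  shows "(\<Sum>i\<in>I. x i powr p) \<le> (\<Sum>i\<in>I. x i) powr p"
proof -
  define S where "S = (\<Sum>i\<in>I. x i)"
  have S0: "S \<ge> 0" unfolding S_def using assms by (simp add: sum_nonneg)
  have xS: "x i \<le> S" if "i \<in> I" for i
    unfolding S_def using assms that by (intro member_le_sum) auto
  have "x i powr p \<le> x i * S powr (p-1)" if "i \<in> I" for i
  proof (cases "x i = 0")
    case True then show ?thesis by simp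
  next
    case False
    then have xp: "x i > 0" using assms that by force
    have "x i powr p = x i * x i powr (p-1)" using xp by (simp add: powr_diff)
    also have "\<dots> \<le> x i * S powr (p-1)"
      using xp xS[OF that] assms by (intro mult_left_mono powr_mono2) auto
    finally show ?thesis .
  qed
  then have "(\<Sum>i\<in>I. x i powr p) \<le> (\<Sum>i\<in>I. x i * S powr (p-1))" by (intro sum_mono)
  also have "\<dots> = S * S powr (p-1)" unfolding S_def by (simp add: sum_distrib_right)
  also have "\<dots> = S powr p"
  proof (cases "S = 0")
    case True then show ?thesis using assms by simp
  next
    case False then show ?thesis using S0 by (simp add: powr_diff)
  qed
  finally show ?thesis unfolding S_def .
qed

lemma trunc_sum_pow:
  assumes "1 \<le> p"
  shows "(\<Sum>k\<in>{L..U}. \<bar>trunc k a - trunc k b\<bar> powr p) \<le> \<bar>a - b\<bar> powr p"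
proof (cases "L \<le> U")
  case False then show ?thesis by simp
next
  case LU: True
  have gen: "(\<Sum>k\<in>{L..U}. \<bar>trunc k a - trunc k b\<bar>) \<le> \<bar>a - b\<bar>" for a b
  proof -
    have wlog: "(\<Sum>k\<in>{L..U}. \<bar>trunc k a - trunc k b\<bar>) \<le> \<bar>a - b\<bar>" if ab: "b \<le> a" for a b
    proof -
      have "(\<Sum>k\<in>{L..U}. \<bar>trunc k a - trunc k b\<bar>) = (\<Sum>k\<in>{L..U}. trunc k a - trunc k b)"
        using trunc_mono[OF ab] by (intro sum.cong) auto
      also have "\<dots> = (\<Sum>k\<in>{L..U}. trunc k a) - (\<Sum>k\<in>{L..U}. trunc k b)"
        by (simp add: sum_subtractf)
      also have "\<dots> \<le> \<bar>a - b\<bar>"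
        using LU ab by (simp add: trunc_tele)
      finally show ?thesis .
    qed
    show ?thesis
    proof (cases "b \<le> a")
      case True then show ?thesis by (rule wlog)
    next
      case False
      then have "(\<Sum>k\<in>{L..U}. \<bar>trunc k b - trunc k a\<bar>) \<le> \<bar>b - a\<bar>" by (intro wlog) auto
      then show ?thesis by (simp add: abs_minus_commute)
    qed
  qed
  have "(\<Sum>k\<in>{L..U}. \<bar>trunc k a - trunc k b\<bar> powr p) \<le> (\<Sum>k\<in>{L..U}. \<bar>trunc k a - trunc k b\<bar>) powr p"
    using assms by (intro sum_powr_le) auto
  also have "\<dots> \<le> \<bar>a - b\<bar> powr p"
    using gen assms by (intro powr_mono2) (auto simp: sum_nonneg)
  finally show ?thesis .
qed

lemma ball_radius_for:
  assumes "v > 0"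
  shows "emeasure lborel (ball (0::'a::euclidean_space) ((v / unit_ball_vol DIM('a)) powr (1/DIM('a)))) = ennreal v"
proof -
  define om where "om = unit_ball_vol (real DIM('a))"
  have om: "om > 0" unfolding om_def by simp
  have "((v / om) powr (1/DIM('a))) ^ DIM('a) = v / om"
    using assms om by (simp add: powr_realpow[symmetric] powr_powr)
  moreover have "emeasure lborel (ball (0::'a) ((v / om) powr (1/DIM('a)))) = ennreal (om * ((v / om) powr (1/DIM('a))) ^ DIM('a))"
    unfolding om_def by (rule emeasure_ball) simp
  ultimately show ?thesis using om unfolding om_def[symmetric] by simp
qed

lemma cap_lower:
  fixes G :: "'a::euclidean_space set" and s v :: real
  defines "n \<equiv> real DIM('a)"
  assumes s: "s > 0" and G: "G \<in> sets lborel" and Gv: "emeasure lborel G = ennreal v" and v: "v > 0"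
  shows "ennreal ((unit_ball_vol n / 2) * (2 / unit_ball_vol n) powr (-s/n) * v powr (-s/n))
     \<le> (\<integral>\<^sup>+ h. indicator (-G) h * ennreal (norm h powr (-(n+s))) \<partial>lborel)"
proof -
  define om where "om = unit_ball_vol n"
  have om: "om > 0" unfolding om_def n_def by simp
  have n: "n > 0" unfolding n_def by simp
  define r where "r = (2 * v / om) powr (1/n)"
  have r: "r > 0" unfolding r_def using v om by simp
  have Br: "emeasure lborel (ball (0::'a) r) = ennreal (2 * v)"
    using ball_radius_for[of "2 * v", where 'a='a] v unfolding r_def om_def n_def by simp
  define D where "D = ball (0::'a) r - G - {0}"
  have Dm: "D \<in> sets lborel" unfolding D_def using G by auto
  have "ball (0::'a) r \<subseteq> (D \<union> G) \<union> {0}" unfolding D_def by auto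
  moreover have Z: "{0::'a} \<in> sets lborel" by simp
  moreover have U: "(D \<union> G) \<union> {0} \<in> sets lborel" using Dm G Z by (intro sets.Un)
  ultimately have "emeasure lborel (ball (0::'a) r) \<le> emeasure lborel ((D \<union> G) \<union> {0})"
    by (intro emeasure_mono) auto
  also have "\<dots> \<le> emeasure lborel (D \<union> G) + emeasure lborel {0::'a}"
    using Dm G by (intro emeasure_subadditive) auto
  also have "\<dots> \<le> emeasure lborel D + emeasure lborel G"
    using Dm G by (simp add: emeasure_subadditive)
  finally have le2: "ennreal (2 * v) \<le> emeasure lborel D + ennreal v" using Br Gv by simp
  have "emeasure lborel D \<le> emeasure lborel (ball (0::'a) r)"
    by (rule emeasure_mono) (auto simp: D_def)
  then have fin: "emeasure lborel D < \<infinity>"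
    using emeasure_lborel_ball_finite[of "0::'a" r] by (rule le_less_trans)
  define d where "d = enn2real (emeasure lborel D)"
  have d1: "emeasure lborel D = ennreal d" unfolding d_def using fin by (simp add: ennreal_enn2real less_top[symmetric])
  have d2: "d \<ge> 0" unfolding d_def by simp
  have "ennreal (2 * v) \<le> ennreal (d + v)" using le2 d1 d2 v ennreal_plus[of d v] by simp
  then have d3: "v \<le> d" using d2 v by (subst (asm) ennreal_le_iff) auto
  note d = d1 d2 d3
  have pt: "ennreal (r powr (-(n+s))) * indicator D h \<le> indicator (-G) h * ennreal (norm h powr (-(n+s)))" for h
  proof (cases "h \<in> D")
    case True
    then have "0 < norm h" "norm h < r" "h \<notin> G" unfolding D_def by auto
    then have "r powr (-(n+s)) \<le> norm h powr (-(n+s))"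
      using n s by (intro powr_mono2') auto
    then show ?thesis using True \<open>h \<notin> G\<close> by (simp add: indicator_def)
  qed simp
  have "ennreal (r powr (-(n+s))) * emeasure lborel D = (\<integral>\<^sup>+ h. ennreal (r powr (-(n+s))) * indicator D h \<partial>lborel)"
    using Dm by (simp add: nn_integral_cmult_indicator)
  also have "\<dots> \<le> (\<integral>\<^sup>+ h. indicator (-G) h * ennreal (norm h powr (-(n+s))) \<partial>lborel)"
    by (intro nn_integral_mono pt)
  finally have I: "ennreal (r powr (-(n+s)) * d) \<le> (\<integral>\<^sup>+ h. indicator (-G) h * ennreal (norm h powr (-(n+s))) \<partial>lborel)"
    using d by (simp add: ennreal_mult)
  have e: "(1/n) * (-(n+s)) = -1 + -s/n" using n by (simp add: field_simps)
  have "r powr (-(n+s)) = (2 * v / om) powr ((1/n) * (-(n+s)))" unfolding r_def by (simp add: powr_powr)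
  also have "\<dots> = (2 * v / om) powr (-1) * (2 * v / om) powr (-s/n)" unfolding e by (rule powr_add)
  also have "(2 * v / om) powr (-s/n) = (2/om) powr (-s/n) * v powr (-s/n)"
    using v om by (simp add: powr_mult[symmetric])
  finally have "r powr (-(n+s)) * v = (om/2) * (2/om) powr (-s/n) * v powr (-s/n)"
    using v om by (simp add: powr_minus field_simps)
  moreover have "r powr (-(n+s)) * v \<le> r powr (-(n+s)) * d" using d by (simp add: mult_left_mono)
  ultimately show ?thesis using I unfolding om_def
    by (metis (no_types, lifting) ennreal_leI order_trans)
qed

lemma ball_part:
  fixes s r :: real
  defines "n \<equiv> real DIM('a::euclidean_space)"
  assumes s: "0 < s" "s < n" and r: "r > 0"
  shows "(\<integral>\<^sup>+ x. indicator (ball (0::'a) r) x * ennreal (norm x powr (-s)) \<partial>lborel)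
     \<le> ennreal (unit_ball_vol n * 2 powr s * r powr (n-s) / (1 - 2 powr (s-n)))"
proof -
  define om where "om = unit_ball_vol n"
  have om: "om > 0" unfolding om_def n_def by simp
  have n: "n > 0" unfolding n_def by simp
  define c where "c j = (r * 2 powr (-(real j+1))) powr (-s)" for j :: nat
  define \<rho> where "\<rho> j = r * 2 powr (-real j)" for j :: nat
  have \<rho>0: "\<rho> j > 0" for j unfolding \<rho>_def using r by simp
  have summ: "summable (\<lambda>j. ennreal (c j) * indicator (cball (0::'a) (\<rho> j)) x)" for x
    by (rule summableI)
  have pt: "indicator (ball (0::'a) r) x * ennreal (norm x powr (-s))
      \<le> (\<Sum>j. ennreal (c j) * indicator (cball (0::'a) (\<rho> j)) x)" for x
  proof (cases "x \<in> ball 0 r \<and> x \<noteq> 0")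
    case False
    then show ?thesis by (auto simp: indicator_def)
  next
    case True
    then have x0: "norm x > 0" and xr: "norm x < r" by auto
    define y where "y = r / norm x"
    have y1: "y > 1" unfolding y_def using x0 xr by simp
    define k where "k = \<lfloor>log 2 y\<rfloor>"
    have k: "2 powr k \<le> y" "y < 2 powr (k+1)"
      using floor_log_eq_powr_iff[of y 2 k] y1 unfolding k_def by auto
    have k0: "k \<ge> 0" unfolding k_def using y1 by simp
    define j where "j = nat k"
    have jk: "real j = real_of_int k" unfolding j_def using k0 by simp
    have "norm x \<le> \<rho> j"
    proof -
      have "2 powr real j \<le> r / norm x" using k(1) jk unfolding y_def by simp
      then have "norm x * 2 powr real j \<le> r" using x0 by (simp add: field_simps)
      then show ?thesis unfolding \<rho>_def using x0 by (simp add: powr_minus field_simps)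
    qed
    then have ind: "indicator (cball (0::'a) (\<rho> j)) x = (1::ennreal)" by simp
    have "r / norm x < 2 powr (real j + 1)" using k(2) jk unfolding y_def by simp
    then have "r < norm x * 2 powr (real j + 1)" using x0 by (simp add: field_simps)
    moreover have "r * 2 powr (-(real j+1)) = r / 2 powr (real j + 1)"
      using powr_minus_divide[of 2 "real j + 1"] by (simp only: divide_inverse)
    ultimately have lo: "r * 2 powr (-(real j+1)) < norm x" by (simp add: divide_less_eq)
    have "norm x powr (-s) \<le> c j" unfolding c_def
      using lo r s by (intro powr_mono2') auto
    then have "indicator (ball (0::'a) r) x * ennreal (norm x powr (-s)) \<le> ennreal (c j) * indicator (cball (0::'a) (\<rho> j)) x"
      using True ind by (simp add: ennreal_leI)
    also have "\<dots> \<le> (\<Sum>j. ennreal (c j) * indicator (cball (0::'a) (\<rho> j)) x)"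
    proof -
      have "(\<Sum>i\<in>{j}. ennreal (c i) * indicator (cball (0::'a) (\<rho> i)) x) \<le> (\<Sum>i. ennreal (c i) * indicator (cball (0::'a) (\<rho> i)) x)"
        by (rule sum_le_suminf) (auto intro: summableI)
      then show ?thesis by (simp only: sum.insert_if finite.emptyI empty_iff if_False sum.empty add_0_right)
    qed
    finally show ?thesis .
  qed
  define q where "q = (2::real) powr (s-n)"
  have "(2::real) powr (s-n) < 2 powr 0" using s by (intro powr_less_mono) auto
  then have q: "0 < q" "q < 1" unfolding q_def by auto
  define A where "A = om * 2 powr s * r powr (n-s)"
  have termj: "c j * (om * \<rho> j ^ DIM('a)) = A * q ^ j" for j
  proof -
    have "\<rho> j ^ DIM('a) = \<rho> j powr n" unfolding n_def using \<rho>0[of j] by (simp add: powr_realpow)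
    also have "\<dots> = r powr n * 2 powr (-real j * n)" unfolding \<rho>_def using r by (simp add: powr_mult powr_powr)
    finally have 1: "\<rho> j ^ DIM('a) = r powr n * 2 powr (-real j * n)" .
    have e2: "- ((- real j - 1) * s) = (real j + 1) * s" by (simp add: algebra_simps)
    have 2: "c j = r powr (-s) * 2 powr ((real j + 1) * s)" unfolding c_def using r
      by (simp add: powr_mult powr_powr e2)
    have 3: "q ^ j = 2 powr (real j * (s - n))" unfolding q_def by (simp add: powr_power mult.commute)
    have "c j * (om * \<rho> j ^ DIM('a)) = om * (r powr (-s) * r powr n) * (2 powr ((real j + 1) * s) * 2 powr (-real j * n))"
      unfolding 1 2 by (simp add: ac_simps)
    also have "r powr (-s) * r powr n = r powr (n-s)" by (simp add: powr_add[symmetric])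
    also have "2 powr ((real j + 1) * s) * 2 powr (-real j * n) = (2::real) powr s * 2 powr (real j * (s - n))"
      by (simp add: powr_add[symmetric] algebra_simps)
    finally show ?thesis unfolding A_def 3 by (simp add: ac_simps)
  qed
  have "(\<integral>\<^sup>+ x. indicator (ball (0::'a) r) x * ennreal (norm x powr (-s)) \<partial>lborel)
      \<le> (\<integral>\<^sup>+ x. (\<Sum>j. ennreal (c j) * indicator (cball (0::'a) (\<rho> j)) x) \<partial>lborel)"
    by (intro nn_integral_mono pt)
  also have "\<dots> = (\<Sum>j. \<integral>\<^sup>+ x. ennreal (c j) * indicator (cball (0::'a) (\<rho> j)) x \<partial>lborel)"
    by (rule nn_integral_suminf) (intro borel_measurable_times_ennreal borel_measurable_const borel_measurable_indicator, simp)
  also have "\<dots> = (\<Sum>j. ennreal (c j * (om * \<rho> j ^ DIM('a))))"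
    using \<rho>0 by (simp add: nn_integral_cmult_indicator emeasure_cball less_imp_le om_def n_def ennreal_mult c_def)
  also have "\<dots> = (\<Sum>j. ennreal (A * q ^ j))" by (simp add: termj)
  also have "\<dots> = ennreal (A * (1 / (1 - q)))"
    using q om r unfolding A_def
    by (intro suminf_ennreal_eq sums_mult geometric_sums) auto
  finally show ?thesis unfolding A_def q_def om_def by simp
qed

lemma riesz_upper:
  fixes E :: "'a::euclidean_space set" and s v :: real
  defines "n \<equiv> real DIM('a)"
  assumes s: "0 < s" "s < n" and Em: "E \<in> sets lborel" and Ev: "emeasure lborel E = ennreal v" and v: "v \<ge> 0"
  shows "(\<integral>\<^sup>+ x. indicator E x * ennreal (norm x powr (-s)) \<partial>lborel)
     \<le> ennreal ((unit_ball_vol n * 2 powr s / (1 - 2 powr (s-n)) * unit_ball_vol n powr (-(n-s)/n)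
          + unit_ball_vol n powr (s/n)) * v powr (1 - s/n))"
proof (cases "v = 0")
  case True
  then have "E \<in> null_sets lborel" using Em Ev by (simp add: null_sets_def)
  then have ae: "AE x in lborel. x \<notin> E" by (rule AE_not_in)
  have "AE x in lborel. indicator E x * ennreal (norm x powr (-s)) = 0"
    using ae by eventually_elim simp
  then have "(\<integral>\<^sup>+ x. indicator E x * ennreal (norm x powr (-s)) \<partial>lborel) = (\<integral>\<^sup>+ x. 0 \<partial>(lborel::'a measure))"
    by (rule nn_integral_cong_AE)
  then show ?thesis by simp
next
  case False
  then have v: "v > 0" using v by simp
  define om where "om = unit_ball_vol n"
  have om: "om > 0" unfolding om_def n_def by simp
  have n: "n > 0" unfolding n_def by simp
  define r where "r = (v / om) powr (1/n)"
  have r: "r > 0" unfolding r_def using v om by simp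
  have pt: "indicator E x * ennreal (norm x powr (-s))
     \<le> indicator (ball (0::'a) r) x * ennreal (norm x powr (-s)) + ennreal (r powr (-s)) * indicator E x" for x
  proof (cases "x \<in> E")
    case False then show ?thesis by simp
  next
    case True
    show ?thesis
    proof (cases "norm x < r")
      case True then show ?thesis by (simp add: \<open>x \<in> E\<close>)
    next
      case False
      then have "norm x powr (-s) \<le> r powr (-s)" using r s by (intro powr_mono2') auto
      then show ?thesis using \<open>x \<in> E\<close> False by (simp add: ennreal_leI)
    qed
  qed
  have "(\<integral>\<^sup>+ x. indicator E x * ennreal (norm x powr (-s)) \<partial>lborel)
     \<le> (\<integral>\<^sup>+ x. indicator (ball (0::'a) r) x * ennreal (norm x powr (-s)) + ennreal (r powr (-s)) * indicator E x \<partial>lborel)"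
    by (intro nn_integral_mono pt)
  also have "\<dots> = (\<integral>\<^sup>+ x. indicator (ball (0::'a) r) x * ennreal (norm x powr (-s)) \<partial>lborel)
      + (\<integral>\<^sup>+ x. ennreal (r powr (-s)) * indicator E x \<partial>lborel)"
  proof -
    have m1: "(\<lambda>x::'a. ennreal (norm x powr (-s))) \<in> borel_measurable lborel" by measurable
    have m2: "(\<lambda>x. indicator (ball (0::'a) r) x * ennreal (norm x powr (-s))) \<in> borel_measurable lborel"
      using m1 by (intro borel_measurable_times_ennreal borel_measurable_indicator) auto
    have m3: "(\<lambda>x. ennreal (r powr (-s)) * indicator E x) \<in> borel_measurable lborel"
      using Em by (intro borel_measurable_times_ennreal) auto
    show ?thesis by (rule nn_integral_add[OF m2 m3])
  qed
  also have "(\<integral>\<^sup>+ x. ennreal (r powr (-s)) * indicator E x \<partial>lborel) = ennreal (r powr (-s) * v)"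
    using Em Ev v by (simp add: nn_integral_cmult_indicator ennreal_mult)
  also have "(\<integral>\<^sup>+ x. indicator (ball (0::'a) r) x * ennreal (norm x powr (-s)) \<partial>lborel)
     \<le> ennreal (om * 2 powr s * r powr (n-s) / (1 - 2 powr (s-n)))"
    unfolding om_def n_def using ball_part[of s r, where 'a='a] s r unfolding n_def by simp
  finally have I0: "(\<integral>\<^sup>+ x. indicator E x * ennreal (norm x powr (-s)) \<partial>lborel)
     \<le> ennreal (om * 2 powr s * r powr (n-s) / (1 - 2 powr (s-n))) + ennreal (r powr (-s) * v)"
    by (auto intro!: add_right_mono)
  have "(2::real) powr (s-n) < 2 powr 0" using s by (intro powr_less_mono) auto
  then have q: "1 - (2::real) powr (s-n) > 0" by simp
  have nn1: "0 \<le> om * 2 powr s * r powr (n-s) / (1 - 2 powr (s-n))" using om q by simp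
  have nn2: "0 \<le> r powr (-s) * v" using v by simp
  have I: "(\<integral>\<^sup>+ x. indicator E x * ennreal (norm x powr (-s)) \<partial>lborel)
     \<le> ennreal (om * 2 powr s * r powr (n-s) / (1 - 2 powr (s-n)) + r powr (-s) * v)"
    using I0 by (simp only: ennreal_plus[OF nn1 nn2])
  have "r powr (n-s) = (v / om) powr ((n-s)/n)" unfolding r_def by (simp add: powr_powr)
  also have "\<dots> = v powr ((n-s)/n) / om powr ((n-s)/n)" using v om by (simp add: powr_divide)
  also have "\<dots> = v powr (1 - s/n) * om powr (-((n-s)/n))"
  proof -
    have e1: "(n-s)/n = 1 - s/n" using n by (simp add: field_simps)
    show ?thesis by (subst e1[symmetric]) (simp add: powr_minus divide_inverse)
  qed
  also have "-((n-s)/n) = -(n-s)/n" by (rule minus_divide_left)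
  finally have r1: "r powr (n-s) = v powr (1 - s/n) * om powr (-(n-s)/n)" .
  have "r powr (-s) = (v / om) powr (-s/n)" unfolding r_def by (simp add: powr_powr)
  also have "\<dots> = v powr (-s/n) / om powr (-s/n)" using v om by (simp add: powr_divide)
  also have "\<dots> = v powr (-s/n) * om powr (s/n)"
    using powr_minus[of om "s/n"] by (simp add: divide_inverse)
  finally have "r powr (-s) * v = om powr (s/n) * (v powr (-s/n) * v powr 1)" using v by simp
  also have "v powr (-s/n) * v powr 1 = v powr (1 - s/n)" by (subst powr_add[symmetric]) (simp add: algebra_simps)
  finally have r2: "r powr (-s) * v = om powr (s/n) * v powr (1 - s/n)" .
  have "om * 2 powr s * r powr (n-s) / (1 - 2 powr (s-n)) + r powr (-s) * v
     = (om * 2 powr s / (1 - 2 powr (s-n)) * om powr (-(n-s)/n) + om powr (s/n)) * v powr (1 - s/n)"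
    unfolding r1 r2 using q by (simp add: field_simps)
  then show ?thesis using I unfolding om_def by simp
qed

definition Bes :: "real \<Rightarrow> real \<Rightarrow> ('a::euclidean_space \<Rightarrow> real) \<Rightarrow> ennreal" where
  "Bes p \<beta> f = (\<integral>\<^sup>+ h. (\<integral>\<^sup>+ x. ennreal (\<bar>f (x+h) - f x\<bar> powr p) \<partial>lborel)
        * ennreal (norm h powr (- (real DIM('a) + \<beta> * p))) \<partial>lborel)"

lemma ennpow_inv:
  assumes "p > 0"
  shows "ennpow (ennpow I (1/p)) p = I"
proof (cases "I = \<infinity>")
  case True then show ?thesis by (simp add: ennpow_def)
next
  case False
  define r where "r = enn2real I"
  have r: "r \<ge> 0" "I = ennreal r" unfolding r_def using False by (auto simp: ennreal_enn2real less_top)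
  have "(r powr (1/p)) powr p = r" using assms r by (simp add: powr_powr)
  then show ?thesis using r by (simp add: ennpow_def)
qed

lemma besov_eq:
  assumes "0 < \<beta>" "\<beta> < 1" "p > 0"
  shows "besov_norm p p \<beta> (f::'a::euclidean_space \<Rightarrow> real) = ennpow (Bes p \<beta> f) (1/p)"
proof -
  have "\<lfloor>\<beta>\<rfloor> = 0" using assms by (simp add: floor_eq_iff)
  then have k: "nat (1 + \<lfloor>\<beta>\<rfloor>) = Suc 0" by simp
  have fd: "fdiff (Suc 0) h f = (\<lambda>x. f (x+h) - f x)" for h by simp
  show ?thesis
    unfolding besov_norm_def Bes_def k fd Lp_norm_def ennpow_inv[OF assms(3)] by simp
qed

lemma trunc_lower:
  fixes f :: "'a::euclidean_space \<Rightarrow> real" and p \<beta> ak ak1 :: real and k :: int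
  defines "n \<equiv> real DIM('a)"
  assumes fc: "continuous_on UNIV f" and p: "p > 0" and \<beta>: "\<beta> > 0"
    and Ak: "emeasure lborel {x. 2 powr k < \<bar>f x\<bar>} = ennreal ak" and ak: "ak > 0"
    and Ak1: "emeasure lborel {x. 2 powr (k+1) < \<bar>f x\<bar>} = ennreal ak1" and ak1: "ak1 \<ge> 0"
  shows "ennreal (2 powr (k*p) * ((unit_ball_vol n / 2) * (2 / unit_ball_vol n) powr (-(\<beta>*p)/n)) * ak1 * ak powr (-(\<beta>*p)/n))
     \<le> Bes p \<beta> (\<lambda>x. trunc k \<bar>f x\<bar>)"
proof -
  have fm[measurable]: "f \<in> borel_measurable borel" by (rule borel_measurable_continuous_onI[OF fc])
  define s where "s = \<beta> * p"
  have s: "s > 0" unfolding s_def using p \<beta> by simp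
  define c3 where "c3 = (unit_ball_vol n / 2) * (2 / unit_ball_vol n) powr (-s/n)"
  have om: "unit_ball_vol n > 0" unfolding n_def by simp
  have c3: "c3 > 0" unfolding c3_def using om by simp
  define g where "g x = trunc k \<bar>f x\<bar>" for x
  define e where "e = - (n + s)"
  define H where "H x h = (if 2 powr (k+1) < \<bar>f x\<bar> \<and> \<bar>f (x+h)\<bar> \<le> 2 powr k
      then ennreal (2 powr (k*p)) * ennreal (norm h powr e) else 0)" for x h :: 'a
  have Hm: "case_prod H \<in> borel_measurable (lborel \<Otimes>\<^sub>M lborel)" unfolding H_def by measurable
  have gm[measurable]: "g \<in> borel_measurable borel" unfolding g_def trunc_def by measurable
  have pt: "H x h \<le> ennreal (\<bar>g (x+h) - g x\<bar> powr p) * ennreal (norm h powr e)" for x h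
  proof (cases "2 powr (k+1) < \<bar>f x\<bar> \<and> \<bar>f (x+h)\<bar> \<le> 2 powr k")
    case True
    have d: "2 powr (real_of_int k + 1) = 2 * 2 powr real_of_int k" by (simp add: powr_add)
    have "(0::real) < 2 powr k" by simp
    then have "g x = 2 powr k" using True d unfolding g_def trunc_def by auto
    moreover have "g (x+h) = 0" using True unfolding g_def trunc_def by auto
    ultimately have "\<bar>g (x+h) - g x\<bar> powr p = 2 powr (k*p)" by (simp add: powr_powr)
    then show ?thesis using True unfolding H_def by (simp add: ennreal_mult'[symmetric])
  qed (auto simp: H_def)
  have "Bes p \<beta> g = (\<integral>\<^sup>+ h. (\<integral>\<^sup>+ x. ennreal (\<bar>g (x+h) - g x\<bar> powr p) * ennreal (norm h powr e) \<partial>lborel) \<partial>lborel)"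
    unfolding Bes_def e_def s_def n_def
    by (intro nn_integral_cong nn_integral_multc[symmetric]) measurable
  also have "\<dots> \<ge> (\<integral>\<^sup>+ h. (\<integral>\<^sup>+ x. H x h \<partial>lborel) \<partial>lborel)"
    by (intro nn_integral_mono pt)
  finally have 1: "(\<integral>\<^sup>+ h. (\<integral>\<^sup>+ x. H x h \<partial>lborel) \<partial>lborel) \<le> Bes p \<beta> g" .
  have 2: "(\<integral>\<^sup>+ h. (\<integral>\<^sup>+ x. H x h \<partial>lborel) \<partial>lborel) = (\<integral>\<^sup>+ x. (\<integral>\<^sup>+ h. H x h \<partial>lborel) \<partial>lborel)"
    by (rule lborel_pair.Fubini'[OF Hm])
  define A where "A = {x::'a. 2 powr k < \<bar>f x\<bar>}"
  define A1 where "A1 = {x::'a. 2 powr (k+1) < \<bar>f x\<bar>}"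
  have Am[measurable]: "A \<in> sets borel" unfolding A_def by measurable
  have A1m[measurable]: "A1 \<in> sets borel" unfolding A1_def by measurable
  have inner: "ennreal (2 powr (k*p) * (c3 * ak powr (-s/n))) * indicator A1 x \<le> (\<integral>\<^sup>+ h. H x h \<partial>lborel)" for x
  proof (cases "x \<in> A1")
    case False then show ?thesis by simp
  next
    case True
    define G where "G = {h. x + h \<in> A}"
    have Gmb[measurable]: "G \<in> sets borel" unfolding G_def A_def by measurable
    then have Gm: "G \<in> sets lborel" by simp
    have "emeasure lborel G = emeasure (distr lborel borel ((+) x)) A"
      unfolding G_def by (subst emeasure_distr) (auto simp: vimage_def)
    also have "\<dots> = ennreal ak" unfolding lborel_distr_plus A_def by (rule Ak)
    finally have Gv: "emeasure lborel G = ennreal ak" .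
    have "ennreal (c3 * ak powr (-s/n)) \<le> (\<integral>\<^sup>+ h. indicator (-G) h * ennreal (norm h powr (-(n+s))) \<partial>lborel)"
      unfolding c3_def n_def by (rule cap_lower[OF s Gm Gv[unfolded n_def] ak, unfolded n_def])
    also have "\<dots> = (\<integral>\<^sup>+ h. indicator (-G) h * ennreal (norm h powr e) \<partial>lborel)" unfolding e_def ..
    finally have cl: "ennreal (c3 * ak powr (-s/n)) \<le> (\<integral>\<^sup>+ h. indicator (-G) h * ennreal (norm h powr e) \<partial>lborel)" .
    have "(\<integral>\<^sup>+ h. H x h \<partial>lborel) = (\<integral>\<^sup>+ h. ennreal (2 powr (k*p)) * (indicator (-G) h * ennreal (norm h powr e)) \<partial>lborel)"
      using True unfolding H_def G_def A1_def A_def by (intro nn_integral_cong) (auto simp: indicator_def not_less)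
    also have "\<dots> = ennreal (2 powr (k*p)) * (\<integral>\<^sup>+ h. indicator (-G) h * ennreal (norm h powr e) \<partial>lborel)"
      by (intro nn_integral_cmult) measurable
    also have "\<dots> \<ge> ennreal (2 powr (k*p)) * ennreal (c3 * ak powr (-s/n))"
      by (intro mult_left_mono cl) simp
    finally show ?thesis using True c3 by (simp add: ennreal_mult[symmetric])
  qed
  have "ennreal (2 powr (k*p) * (c3 * ak powr (-s/n))) * ennreal ak1
      = (\<integral>\<^sup>+ x. ennreal (2 powr (k*p) * (c3 * ak powr (-s/n))) * indicator A1 x \<partial>lborel)"
    using Ak1 unfolding A1_def by (simp add: nn_integral_cmult_indicator)
  also have "\<dots> \<le> (\<integral>\<^sup>+ x. (\<integral>\<^sup>+ h. H x h \<partial>lborel) \<partial>lborel)"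
    by (intro nn_integral_mono inner)
  finally have 3: "ennreal (2 powr (k*p) * (c3 * ak powr (-s/n))) * ennreal ak1 \<le> Bes p \<beta> g"
    using 1 2 by simp
  have 4: "ennreal (2 powr (k*p) * (c3 * ak powr (-s/n)) * ak1) \<le> Bes p \<beta> g"
    using 3 c3 ak1 by (simp add: ennreal_mult)
  have eq: "2 powr (k*p) * (c3 * ak powr (-s/n)) * ak1 = 2 powr (k*p) * c3 * ak1 * ak powr (-s/n)"
    by (simp add: ac_simps)
  show ?thesis using 4[unfolded eq] unfolding g_def c3_def s_def .
qed

lemma trunc_sum_Bes:
  fixes f :: "'a::euclidean_space \<Rightarrow> real"
  assumes fc: "continuous_on UNIV f" and p: "p \<ge> 1"
  shows "(\<Sum>k\<in>{L..U}. Bes p \<beta> (\<lambda>x. trunc k \<bar>f x\<bar>)) \<le> Bes p \<beta> f"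
proof -
  have fm[measurable]: "f \<in> borel_measurable borel" by (rule borel_measurable_continuous_onI[OF fc])
  define e where "e = - (real DIM('a) + \<beta> * p)"
  define G where "G k x h = ennreal (\<bar>trunc k \<bar>f (x+h)\<bar> - trunc k \<bar>f x\<bar>\<bar> powr p)" for k x h
  have Gm[measurable]: "(\<lambda>x. G k x h) \<in> borel_measurable borel" for k h unfolding G_def trunc_def by measurable
  have Gm2[measurable]: "(\<lambda>h. (\<integral>\<^sup>+ x. G k x h \<partial>lborel) * ennreal (norm h powr e)) \<in> borel_measurable borel" for k
    unfolding G_def trunc_def by measurable
  have pt: "(\<Sum>k\<in>{L..U}. G k x h) \<le> ennreal (\<bar>f (x+h) - f x\<bar> powr p)" for x h
  proof -
    have "(\<Sum>k\<in>{L..U}. G k x h) = ennreal (\<Sum>k\<in>{L..U}. \<bar>trunc k \<bar>f (x+h)\<bar> - trunc k \<bar>f x\<bar>\<bar> powr p)"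
      unfolding G_def by (rule sum_ennreal) simp
    also have "\<dots> \<le> ennreal (\<bar>\<bar>f (x+h)\<bar> - \<bar>f x\<bar>\<bar> powr p)"
      by (intro ennreal_leI trunc_sum_pow p)
    also have "\<dots> \<le> ennreal (\<bar>f (x+h) - f x\<bar> powr p)"
      using p by (intro ennreal_leI powr_mono2) (auto simp: abs_triangle_ineq3)
    finally show ?thesis .
  qed
  have "(\<Sum>k\<in>{L..U}. Bes p \<beta> (\<lambda>x. trunc k \<bar>f x\<bar>))
      = (\<Sum>k\<in>{L..U}. \<integral>\<^sup>+ h. (\<integral>\<^sup>+ x. G k x h \<partial>lborel) * ennreal (norm h powr e) \<partial>lborel)"
    unfolding Bes_def G_def e_def by simp
  also have "\<dots> = (\<integral>\<^sup>+ h. (\<Sum>k\<in>{L..U}. (\<integral>\<^sup>+ x. G k x h \<partial>lborel) * ennreal (norm h powr e)) \<partial>lborel)"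
    by (rule nn_integral_sum[symmetric]) simp
  also have "\<dots> = (\<integral>\<^sup>+ h. (\<integral>\<^sup>+ x. (\<Sum>k\<in>{L..U}. G k x h) \<partial>lborel) * ennreal (norm h powr e) \<partial>lborel)"
    by (intro nn_integral_cong) (simp add: sum_distrib_right nn_integral_sum)
  also have "\<dots> \<le> (\<integral>\<^sup>+ h. (\<integral>\<^sup>+ x. ennreal (\<bar>f (x+h) - f x\<bar> powr p) \<partial>lborel) * ennreal (norm h powr e) \<partial>lborel)"
    by (intro nn_integral_mono mult_right_mono pt) simp
  also have "\<dots> = Bes p \<beta> f" unfolding Bes_def e_def ..
  finally show ?thesis .
qed

lemma le_lim_geom:
  fixes x y c q :: real
  assumes "0 \<le> q" "q < 1" "\<And>m::nat. x \<le> y + c * q ^ m"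
  shows "x \<le> y"
proof -
  have "(\<lambda>m. y + c * q ^ m) \<longlonglongrightarrow> y + c * 0"
    using assms by (intro tendsto_intros LIMSEQ_power_zero) auto
  then show ?thesis using assms(3) by (intro LIMSEQ_le_const[of "\<lambda>m. y + c * q ^ m"]) auto
qed

lemma sum_shift_int:
  fixes h :: "int \<Rightarrow> real"
  shows "(\<Sum>k\<in>{L..U}. h k) = (\<Sum>k\<in>{L-1..U-1}. h (k+1))"
  by (rule sum.reindex_bij_witness[of _ "\<lambda>k. k+1" "\<lambda>k. k-1"]) auto

lemma sum_extend_left:
  fixes h :: "int \<Rightarrow> real"
  assumes "\<And>k. h k \<ge> 0" "L' \<le> L"
  shows "(\<Sum>k\<in>{L..U}. h k) \<le> (\<Sum>k\<in>{L'..U}. h k)"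
  using assms by (intro sum_mono2) auto

lemma level_sets:
  fixes f :: "'a::euclidean_space \<Rightarrow> real"
  assumes fc: "continuous_on UNIV f" and supp: "compact (closure {x. f x \<noteq> 0})" and t: "t \<ge> 0"
  shows "{x. t < \<bar>f x\<bar>} \<in> sets lborel"
    and "emeasure lborel {x. t < \<bar>f x\<bar>} = ennreal (measure lborel {x. t < \<bar>f x\<bar>})"
    and "measure lborel {x. t < \<bar>f x\<bar>} \<le> measure lborel (closure {x. f x \<noteq> 0})"
    and "emeasure lborel (closure {x. f x \<noteq> 0}) = ennreal (measure lborel (closure {x. f x \<noteq> 0}))"
proof -
  have fm[measurable]: "f \<in> borel_measurable borel" by (rule borel_measurable_continuous_onI[OF fc])
  show m: "{x. t < \<bar>f x\<bar>} \<in> sets lborel" by simp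
  have sub: "{x. t < \<bar>f x\<bar>} \<subseteq> closure {x. f x \<noteq> 0}"
    using t closure_subset by fastforce
  have fin: "emeasure lborel (closure {x. f x \<noteq> 0}) < \<infinity>" by (rule emeasure_compact_finite[OF supp])
  show S: "emeasure lborel (closure {x. f x \<noteq> 0}) = ennreal (measure lborel (closure {x. f x \<noteq> 0}))"
    using fin by (intro emeasure_eq_ennreal_measure) auto
  have le: "emeasure lborel {x. t < \<bar>f x\<bar>} \<le> emeasure lborel (closure {x. f x \<noteq> 0})"
    using sub by (intro emeasure_mono) auto
  then have fin2: "emeasure lborel {x. t < \<bar>f x\<bar>} < \<infinity>" using fin by (rule le_less_trans)
  show E: "emeasure lborel {x. t < \<bar>f x\<bar>} = ennreal (measure lborel {x. t < \<bar>f x\<bar>})"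
    using fin2 by (intro emeasure_eq_ennreal_measure) auto
  show "measure lborel {x. t < \<bar>f x\<bar>} \<le> measure lborel (closure {x. f x \<noteq> 0})"
    using le unfolding E S by (simp add: ennreal_le_iff)
qed

lemma core:
  fixes p \<beta> :: real
  defines "n \<equiv> real DIM('a::euclidean_space)"
  assumes p: "p \<ge> 1" and \<beta>: "\<beta> > 0" and sn: "\<beta> * p < n"
  shows "\<exists>K>0. \<forall>(f::'a \<Rightarrow> real) Br (L::int) (U::int). continuous_on UNIV f \<and> compact (closure {x. f x \<noteq> 0})
     \<and> Bes p \<beta> f = ennreal Br \<and> Br \<ge> 0 \<longrightarrow>
     (\<Sum>k\<in>{L..U::int}. 2 powr (real_of_int k * p) * (measure lborel {x. 2 powr (real_of_int k) < \<bar>f x\<bar>}) powr (1 - \<beta>*p/n)) \<le> K * Br"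
proof -
  define s where "s = \<beta> * p"
  define \<sigma> where "\<sigma> = s / n"
  define \<theta> where "\<theta> = 1 - \<sigma>"
  define T where "T = (2::real) powr p"
  define \<delta> where "\<delta> = (2::real) powr (-(p+1)/\<theta>)"
  define om where "om = unit_ball_vol n"
  define c3 where "c3 = (om / 2) * (2 / om) powr (-s/n)"
  define K1 where "K1 = 2 * \<delta> powr (-\<sigma>) / c3"
  have n: "n > 0" unfolding n_def by simp
  have s: "s > 0" "s < n" unfolding s_def using p \<beta> sn by auto
  have \<sigma>: "0 < \<sigma>" "\<sigma> < 1" unfolding \<sigma>_def using s n by auto
  have \<theta>: "\<theta> > 0" unfolding \<theta>_def using \<sigma> by simp
  have om: "om > 0" unfolding om_def n_def by simp
  have c3: "c3 > 0" unfolding c3_def using om by simp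
  have T: "T > 1" unfolding T_def using p by simp
  have \<delta>: "\<delta> > 0" unfolding \<delta>_def by simp
  have K1: "K1 > 0" unfolding K1_def using c3 \<delta> by simp
  have Td: "T * \<delta> powr (1-\<sigma>) \<le> 1/2"
  proof -
    have "\<delta> powr (1-\<sigma>) = 2 powr (-(p+1))"
      unfolding \<delta>_def \<theta>_def[symmetric] using \<theta> by (simp add: powr_powr)
    then have "T * \<delta> powr (1-\<sigma>) = 2 powr (p + -(p+1))" unfolding T_def by (simp only: powr_add)
    also have "p + -(p+1) = -1" by simp
    also have "(2::real) powr (-1) = 1/2" by (simp add: powr_minus_divide)
    finally show ?thesis by simp
  qed
  show ?thesis
  proof (intro exI[of _ "T * K1"] conjI allI impI)
    show "T * K1 > 0" using T K1 by simp
    fix f :: "'a \<Rightarrow> real" and Br :: real and L U :: int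
    assume asm: "continuous_on UNIV f \<and> compact (closure {x. f x \<noteq> 0}) \<and> Bes p \<beta> f = ennreal Br \<and> Br \<ge> 0"
    then have fc: "continuous_on UNIV f" and supp: "compact (closure {x. f x \<noteq> 0})"
      and Bf: "Bes p \<beta> f = ennreal Br" and Br: "Br \<ge> 0" by auto
    have fm[measurable]: "f \<in> borel_measurable borel" by (rule borel_measurable_continuous_onI[OF fc])
    define a where "a k = measure lborel {x. 2 powr k < \<bar>f x\<bar>}" for k :: int
    define Vs where "Vs = measure lborel (closure {x. f x \<noteq> 0})"
    have ea: "emeasure lborel {x. 2 powr k < \<bar>f x\<bar>} = ennreal (a k)" for k
      unfolding a_def by (rule level_sets(2)[OF fc supp]) simp
    have aVs: "a k \<le> Vs" for k unfolding a_def Vs_def by (rule level_sets(3)[OF fc supp]) simp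
    have a0: "a k \<ge> 0" for k unfolding a_def by simp
    have amono: "a (k+1) \<le> a k" for k
    proof -
      have "{x. 2 powr (real_of_int (k+1)) < \<bar>f x\<bar>} \<subseteq> {x. 2 powr k < \<bar>f x\<bar>}"
      proof
        fix x assume x: "x \<in> {x. 2 powr (real_of_int (k+1)) < \<bar>f x\<bar>}"
        have lt: "(2::real) powr real_of_int k < 2 powr real_of_int (k+1)" by (intro powr_less_mono) auto
        from x have "2 powr (real_of_int (k+1)) < \<bar>f x\<bar>" by simp
        with lt have "2 powr real_of_int k < \<bar>f x\<bar>" by linarith
        then show "x \<in> {x. 2 powr real_of_int k < \<bar>f x\<bar>}" by simp
      qed
      then have "emeasure lborel {x. 2 powr (real_of_int (k+1)) < \<bar>f x\<bar>} \<le> emeasure lborel {x. 2 powr k < \<bar>f x\<bar>}"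
        by (rule emeasure_mono) simp
      then show ?thesis using ea[of k] ea[of "k+1"] a0 by (simp add: ennreal_le_iff)
    qed
    define R where "R k = T powr k * a (k+1) * a k powr (-\<sigma>)" for k :: int
    have R0: "R k \<ge> 0" for k unfolding R_def using a0 by simp
    have Rk: "ennreal (c3 * R k) \<le> Bes p \<beta> (\<lambda>x. trunc k \<bar>f x\<bar>)" for k
    proof (cases "a k = 0")
      case True
      then have "a (k+1) = 0" using amono[of k] a0[of "k+1"] by simp
      then show ?thesis unfolding R_def by simp
    next
      case False
      then have ak: "a k > 0" using a0[of k] by simp
      have "ennreal (2 powr (k*p) * ((unit_ball_vol n / 2) * (2 / unit_ball_vol n) powr (-(\<beta>*p)/n)) * a (k+1) * a k powr (-(\<beta>*p)/n))
         \<le> Bes p \<beta> (\<lambda>x. trunc k \<bar>f x\<bar>)"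
        unfolding n_def
        by (rule trunc_lower[OF fc _ \<beta> ea[of k] ak ea[of "k+1"] a0]) (use p in simp)
      moreover have "2 powr (k*p) * ((unit_ball_vol n / 2) * (2 / unit_ball_vol n) powr (-(\<beta>*p)/n)) * a (k+1) * a k powr (-(\<beta>*p)/n)
          = c3 * R k"
      proof -
        have "T powr k = 2 powr (k*p)" unfolding T_def by (simp add: powr_powr mult.commute)
        moreover have "-(\<beta>*p)/n = -\<sigma>" unfolding \<sigma>_def s_def by simp
        ultimately show ?thesis unfolding R_def c3_def om_def s_def by (simp add: ac_simps)
      qed
      ultimately show ?thesis by simp
    qed
    have Rsum: "c3 * (\<Sum>k\<in>{L'..U'}. R k) \<le> Br" for L' U'
    proof -
      have "ennreal (c3 * (\<Sum>k\<in>{L'..U'}. R k)) = (\<Sum>k\<in>{L'..U'}. ennreal (c3 * R k))"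
        using c3 R0 by (simp add: sum_distrib_left sum_ennreal)
      also have "\<dots> \<le> (\<Sum>k\<in>{L'..U'}. Bes p \<beta> (\<lambda>x. trunc k \<bar>f x\<bar>))" by (intro sum_mono Rk)
      also have "\<dots> \<le> Bes p \<beta> f" by (rule trunc_sum_Bes[OF fc p])
      finally show ?thesis using Bf Br by (simp add: ennreal_le_iff)
    qed
    define Q where "Q k = T powr k * a (k+1) powr (1-\<sigma>)" for k :: int
    have Q0: "Q k \<ge> 0" for k unfolding Q_def by simp
    have Qbound: "(\<Sum>k\<in>{L'..U'}. Q k) \<le> K1 * Br + T powr (L'-1) * Vs powr (1-\<sigma>)" if "L' \<le> U'" for L' U'
    proof -
      have "(\<Sum>k\<in>{L'..U'}. Q k) \<le> 2 * \<delta> powr (-\<sigma>) * (\<Sum>k\<in>{L'..U'}. R k) + T powr (L'-1) * a L' powr (1-\<sigma>)"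
      proof -
        have Tp: "T > 0" using T by simp
        show ?thesis unfolding Q_def R_def using seq_lemma[where a=a and T=T and \<delta>=\<delta> and \<sigma>=\<sigma>, OF a0 amono Tp \<delta> \<sigma> Td that] by simp
      qed
      also have "2 * \<delta> powr (-\<sigma>) * (\<Sum>k\<in>{L'..U'}. R k) \<le> K1 * Br"
      proof -
        have "2 * \<delta> powr (-\<sigma>) * (\<Sum>k\<in>{L'..U'}. R k) = K1 * (c3 * (\<Sum>k\<in>{L'..U'}. R k))"
          unfolding K1_def using c3 by simp
        also have "\<dots> \<le> K1 * Br" using K1 Rsum by (intro mult_left_mono) auto
        finally show ?thesis .
      qed
      also have "T powr (L'-1) * a L' powr (1-\<sigma>) \<le> T powr (L'-1) * Vs powr (1-\<sigma>)"
        using aVs a0 \<sigma> by (intro mult_left_mono powr_mono2) auto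
      finally show ?thesis by simp
    qed
    define P where "P k = T powr k * a k powr (1-\<sigma>)" for k :: int
    have P0: "P k \<ge> 0" for k unfolding P_def by simp
    have bound: "(\<Sum>k\<in>{L..U}. P k) \<le> T * K1 * Br + (T powr (L - 1) * Vs powr (1-\<sigma>)) * (1/T) ^ m" for m :: nat
    proof (cases "L \<le> U")
      case False
      then show ?thesis using T K1 Br by simp
    next
      case LU: True
      define L' where "L' = L - int m"
      have "(\<Sum>k\<in>{L..U}. P k) \<le> (\<Sum>k\<in>{L'..U}. P k)"
        unfolding L'_def by (rule sum_extend_left[OF P0]) simp
      also have "\<dots> = (\<Sum>k\<in>{L'-1..U-1}. P (k+1))" by (rule sum_shift_int)
      also have "\<dots> = T * (\<Sum>k\<in>{L'-1..U-1}. Q k)"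
        unfolding P_def Q_def sum_distrib_left using T
        by (intro sum.cong) (auto simp: powr_add)
      also have "\<dots> \<le> T * (K1 * Br + T powr (L'-1-1) * Vs powr (1-\<sigma>))"
        using T LU unfolding L'_def by (intro mult_left_mono Qbound) auto
      also have "T powr (L'-1-1) = T powr (L-1) * (1/T) ^ m / T"
      proof -
        have "T powr (L'-1-1) = T powr (real_of_int (L-1) + (- real m) + (-1))"
          unfolding L'_def by simp
        also have "\<dots> = T powr (L-1) * T powr (- real m) * T powr (-1)"
          by (simp only: powr_add)
        also have "T powr (- real m) = (1/T) ^ m"
          using T by (simp add: powr_minus_divide powr_realpow power_one_over)
        finally show ?thesis using T by (simp add: powr_minus_divide)
      qed
      finally have X: "(\<Sum>k\<in>{L..U}. P k) \<le> T * (K1 * Br + T powr (L-1) * (1/T) ^ m / T * Vs powr (1-\<sigma>))" .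
      have "T * (K1 * Br + T powr (L-1) * (1/T) ^ m / T * Vs powr (1-\<sigma>)) = T * K1 * Br + (T powr (L - 1) * Vs powr (1-\<sigma>)) * (1/T) ^ m"
        using T by (simp add: field_simps)
      then show ?thesis using X by simp
    qed
    have "(\<Sum>k\<in>{L..U}. P k) \<le> T * K1 * Br"
    proof (rule le_lim_geom)
      show "0 \<le> 1/T" using T by simp
      show "1/T < 1" using T by simp
      show "(\<Sum>k\<in>{L..U}. P k) \<le> T * K1 * Br + (T powr (L - 1) * Vs powr (1-\<sigma>)) * (1/T) ^ m" for m
        by (rule bound)
    qed
    moreover have "P k = 2 powr (real_of_int k * p) * (measure lborel {x. 2 powr (real_of_int k) < \<bar>f x\<bar>}) powr (1 - \<beta>*p/n)" for k
      unfolding P_def a_def T_def \<sigma>_def s_def by (simp add: powr_powr mult.commute)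
    ultimately show "(\<Sum>k\<in>{L..U::int}. 2 powr (real_of_int k * p) * (measure lborel {x. 2 powr (real_of_int k) < \<bar>f x\<bar>}) powr (1 - \<beta>*p/n)) \<le> T * K1 * Br"
      by simp
  qed
qed

lemma pow_step:
  assumes X: "X \<le> ennreal (c * Br powr b)" and c: "c > 0" and Br: "Br \<ge> 0" and a: "a > 0"
  shows "ennpow X a \<le> ennreal (c powr a) * ennpow (ennreal Br) (a * b)"
proof -
  have Xf: "X \<noteq> \<infinity>" using X by (auto simp: top_unique)
  then have xe: "X = ennreal (enn2real X)" by (simp add: ennreal_enn2real less_top)
  have nn: "0 \<le> c * Br powr b" using c by simp
  have "ennreal (enn2real X) \<le> ennreal (c * Br powr b)" using X xe by simp
  then have le: "enn2real X \<le> c * Br powr b" by (subst (asm) ennreal_le_iff[OF nn])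
  have e: "ennpow X a = ennreal (enn2real X powr a)" using Xf by (simp add: ennpow_def)
  have "enn2real X powr a \<le> (c * Br powr b) powr a" using le a by (intro powr_mono2) auto
  also have "(c * Br powr b) powr a = c powr a * Br powr (a * b)"
    using c Br by (simp add: powr_mult powr_powr mult.commute)
  finally have "ennreal (enn2real X powr a) \<le> ennreal (c powr a * Br powr (a * b))" by (rule ennreal_leI)
  also have "\<dots> = ennreal (c powr a) * ennpow (ennreal Br) (a * b)"
    using Br by (simp add: ennpow_def ennreal_mult)
  finally show ?thesis using e by simp
qed

lemma le_lim_geom_enn:
  fixes y c q :: real
  assumes "0 \<le> q" "q < 1" "c \<ge> 0" "\<And>m::nat. x \<le> ennreal (y + c * q ^ m)" "y \<ge> 0"
  shows "x \<le> ennreal y"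
proof -
  have "x \<le> ennreal (y + c * q ^ 0)" by (rule assms(4))
  then have xf: "x \<noteq> \<infinity>" by (auto simp: top_unique)
  then have xe: "x = ennreal (enn2real x)" by (simp add: ennreal_enn2real less_top)
  have bnd: "enn2real x \<le> y + c * q ^ m" for m
  proof -
    have "ennreal (enn2real x) \<le> ennreal (y + c * q ^ m)" using assms(4)[of m] xe by simp
    moreover have nn: "y + c * q ^ m \<ge> 0" using assms by simp
    ultimately show ?thesis by (subst (asm) ennreal_le_iff[OF nn])
  qed
  have "enn2real x \<le> y" by (rule le_lim_geom[OF assms(1,2) bnd])
  then show ?thesis using xe by (metis ennreal_leI)
qed

lemma exists_dyadic:
  fixes t :: real
  assumes "t > 0"
  shows "\<exists>k::int. 2 powr k < t \<and> t \<le> 2 powr (k+1)"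
proof (intro exI conjI)
  define k where "k = \<lceil>log 2 t\<rceil> - 1"
  have "real_of_int k < log 2 t" unfolding k_def by linarith
  then have "2 powr real_of_int k < 2 powr (log 2 t)" by (intro powr_less_mono) auto
  then show "2 powr real_of_int k < t" using assms by simp
  have "log 2 t \<le> real_of_int (k+1)" unfolding k_def by simp
  then have "2 powr (log 2 t) \<le> 2 powr real_of_int (k+1)" by (intro powr_mono) auto
  then show "t \<le> 2 powr (real_of_int k + 1)" using assms by simp
qed

lemma C0inf_props:
  assumes "f \<in> C0inf"
  shows "continuous_on UNIV f" "compact (closure {x. f x \<noteq> 0})" "\<exists>U::int. \<forall>x. \<bar>f x\<bar> \<le> 2 powr U"
proof -
  have sm: "smooth f" and cp: "compact (closure {x. f x \<noteq> 0})" using assms by (auto simp: C0inf_def)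
  have "Ck 0 f" using sm unfolding smooth_def by blast
  then show fc: "continuous_on UNIV f" by simp
  show "compact (closure {x. f x \<noteq> 0})" by (rule cp)
  have "compact (f ` closure {x. f x \<noteq> 0})"
    by (rule compact_continuous_image[OF continuous_on_subset[OF fc] cp]) simp
  then have "bounded (f ` closure {x. f x \<noteq> 0})" by (rule compact_imp_bounded)
  then obtain B where B: "\<forall>y\<in>f ` closure {x. f x \<noteq> 0}. norm y \<le> B"
    unfolding bounded_iff by blast
  have fb: "\<bar>f x\<bar> \<le> max B 0" for x
  proof (cases "f x = 0")
    case False
    then have "x \<in> {x. f x \<noteq> 0}" by simp
    then have "x \<in> closure {x. f x \<noteq> 0}" by (rule subsetD[OF closure_subset])
    then have "f x \<in> f ` closure {x. f x \<noteq> 0}" by (rule imageI)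
    then have "norm (f x) \<le> B" by (rule bspec[OF B])
    then show ?thesis by (simp add: le_max_iff_disj)
  qed simp
  obtain m :: nat where m: "max B 0 < 2 ^ m" using real_arch_pow[of 2 "max B 0"] by auto
  show "\<exists>U::int. \<forall>x. \<bar>f x\<bar> \<le> 2 powr U"
  proof (intro exI allI)
    fix x
    have "\<bar>f x\<bar> \<le> 2 ^ m" using fb[of x] m by linarith
    also have "(2::real) ^ m = 2 powr real_of_int (int m)" by (simp add: powr_realpow)
    finally show "\<bar>f x\<bar> \<le> 2 powr real_of_int (int m)" .
  qed
qed

lemma m_mono:
  fixes f :: "'a::euclidean_space \<Rightarrow> real"
  assumes fc: "continuous_on UNIV f" and supp: "compact (closure {x. f x \<noteq> 0})" and t: "0 \<le> t1" "t1 \<le> t2"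
  shows "measure lborel {x. t2 < \<bar>f x\<bar>} \<le> measure lborel {x. t1 < \<bar>f x\<bar>}"
proof -
  have fm[measurable]: "f \<in> borel_measurable borel" by (rule borel_measurable_continuous_onI[OF fc])
  have "{x. t2 < \<bar>f x\<bar>} \<subseteq> {x. t1 < \<bar>f x\<bar>}" using t by auto
  then have "emeasure lborel {x. t2 < \<bar>f x\<bar>} \<le> emeasure lborel {x. t1 < \<bar>f x\<bar>}"
    by (rule emeasure_mono) simp
  then show ?thesis
    unfolding level_sets(2)[OF fc supp t(1)] level_sets(2)[OF fc supp order.trans[OF t]]
    by (simp add: ennreal_le_iff)
qed

lemma F_props:
  fixes p :: real
  assumes p: "p > 0"
  shows "\<And>x y. x \<le> y \<Longrightarrow> (max 0 x) powr p \<le> (max 0 y) powr p"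
    and "\<And>a. continuous (at_right a) (\<lambda>t. (max 0 t) powr p)"
proof -
  show "(max 0 x) powr p \<le> (max 0 y) powr p" if "x \<le> y" for x y :: real
    using that p by (intro powr_mono2) auto
  have "continuous_on UNIV (\<lambda>t::real. (max 0 t) powr p)"
    using p by (intro continuous_on_powr' continuous_intros) auto
  then show "continuous (at_right a) (\<lambda>t. (max 0 t) powr p)" for a :: real
    by (simp add: continuous_on_eq_continuous_within continuous_at_imp_continuous_at_within)
qed

lemma S1_core:
  fixes p \<beta> :: real
  defines "n \<equiv> real DIM('a::euclidean_space)"
  assumes p: "p \<ge> 1" and \<beta>: "\<beta> > 0" and sn: "\<beta> * p < n"
  shows "\<exists>C>0. \<forall>f::'a \<Rightarrow> real. f \<in> C0inf \<longrightarrow>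
     (\<integral>\<^sup>+ t. indicator {0<..} t * ennpow (emeasure lborel (Ot t f)) ((n - p * \<beta>) / n)
        \<partial>(interval_measure (\<lambda>t. (max 0 t) powr p))) \<le> ennreal C * Bes p \<beta> f"
proof -
  obtain K where K: "K > 0" and Kc: "\<And>(f::'a \<Rightarrow> real) Br L U. continuous_on UNIV f \<and> compact (closure {x. f x \<noteq> 0})
     \<and> Bes p \<beta> f = ennreal Br \<and> Br \<ge> 0 \<Longrightarrow>
     (\<Sum>k\<in>{L..U::int}. 2 powr (real_of_int k * p) * (measure lborel {x. 2 powr (real_of_int k) < \<bar>f x\<bar>}) powr (1 - \<beta>*p/n)) \<le> K * Br"
    using core[OF p \<beta> sn[unfolded n_def]] unfolding n_def by blast
  have n: "n > 0" unfolding n_def by simp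
  define \<theta> where "\<theta> = 1 - \<beta>*p/n"
  have \<theta>eq: "(n - p * \<beta>) / n = \<theta>" unfolding \<theta>_def using n by (simp add: field_simps)
  have \<theta>: "\<theta> > 0" unfolding \<theta>_def using sn n by (simp add: field_simps)
  define F where "F t = (max 0 t) powr p" for t :: real
  have p0: "p > 0" using p by simp
  have Fmono: "F x \<le> F y" if "x \<le> y" for x y unfolding F_def by (rule F_props(1)[OF p0 that])
  have Fcont: "continuous (at_right a) F" for a unfolding F_def[abs_def] by (rule F_props(2)[OF p0])
  have muI: "emeasure (interval_measure F) {a<..b} = ennreal (F b - F a)" if "a \<le> b" for a b
    using emeasure_interval_measure_Ioc[OF that Fmono Fcont] by simp
  have F2: "F (2 powr x) = 2 powr (x * p)" for x unfolding F_def by (simp add: powr_powr)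
  have F0: "F 0 = 0" unfolding F_def using p0 by simp
  show ?thesis
  proof (intro exI[of _ "2 powr p * K"] conjI allI impI)
    show "2 powr p * K > 0" using K by simp
    fix f :: "'a \<Rightarrow> real" assume fC: "f \<in> C0inf"
    have fc: "continuous_on UNIV f" and supp: "compact (closure {x. f x \<noteq> 0})"
      using C0inf_props[OF fC] by auto
    obtain U :: int where U: "\<And>x. \<bar>f x\<bar> \<le> 2 powr U" using C0inf_props(3)[OF fC] by blast
    have fm[measurable]: "f \<in> borel_measurable borel" by (rule borel_measurable_continuous_onI[OF fc])
    define J where "J t = indicator {0<..} t * ennpow (emeasure lborel (Ot t f)) \<theta>" for t
    show "(\<integral>\<^sup>+ t. indicator {0<..} t * ennpow (emeasure lborel (Ot t f)) ((n - p * \<beta>) / n)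
        \<partial>(interval_measure (\<lambda>t. (max 0 t) powr p))) \<le> ennreal (2 powr p * K) * Bes p \<beta> f"
    proof (cases "Bes p \<beta> f = \<infinity>")
      case True
      then show ?thesis using K by (simp add: ennreal_mult_top)
    next
      case False
      define Br where "Br = enn2real (Bes p \<beta> f)"
      have Bf: "Bes p \<beta> f = ennreal Br" and Br: "Br \<ge> 0"
        unfolding Br_def using False by (auto simp: ennreal_enn2real less_top)
      define m where "m t = measure lborel {x. t < \<bar>f x\<bar>}" for t
      define a where "a k = m (2 powr real_of_int k)" for k :: int
      define Vs where "Vs = measure lborel (closure {x. f x \<noteq> 0})"
      have m0: "m t \<ge> 0" for t unfolding m_def by simp
      have Jt: "J t = ennreal (m t powr \<theta>)" if "t > 0" for t
      proof -
        have "emeasure lborel (Ot t f) = ennreal (m t)"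
          unfolding Ot_def m_def using level_sets(2)[OF fc supp, of t] that by simp
        then show ?thesis unfolding J_def using that m0[of t] by (simp add: ennpow_def)
      qed
      have pt: "J t \<le> ennreal (Vs powr \<theta>) * indicator {0<..2 powr real_of_int L} t
          + (\<Sum>k\<in>{L..U}. ennreal (a k powr \<theta>) * indicator {2 powr real_of_int k<..2 powr (real_of_int k + 1)} t)"
        if LU: "L \<le> U" for t L
      proof (cases "t > 0")
        case False then show ?thesis by (simp add: J_def)
      next
        case tpos: True
        show ?thesis
        proof (cases "t \<le> 2 powr real_of_int L")
          case True
          have "m t \<le> Vs" unfolding m_def Vs_def using level_sets(3)[OF fc supp, of t] tpos by simp
          then have "m t powr \<theta> \<le> Vs powr \<theta>" using m0 \<theta> by (intro powr_mono2) auto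
          then have "J t \<le> ennreal (Vs powr \<theta>) * indicator {0<..2 powr real_of_int L} t"
            using True tpos Jt[OF tpos] by (simp add: ennreal_leI)
          then show ?thesis by (rule add_increasing2[OF zero_le])
        next
          case tL: False
          show ?thesis
          proof (cases "t > 2 powr (real_of_int U + 1)")
            case True
            have lt: "2 powr real_of_int U < 2 powr (real_of_int U + 1)" by simp
            have "\<not> t < \<bar>f x\<bar>" for x
              using U[of x] True lt by linarith
            then have "{x. t < \<bar>f x\<bar>} = {}" by simp
            then have "m t = 0" unfolding m_def by simp
            then show ?thesis using Jt[OF tpos] \<theta> by simp
          next
            case tU: False
            obtain k :: int where k: "2 powr real_of_int k < t" "t \<le> 2 powr (real_of_int k + 1)"
              using exists_dyadic[OF tpos] by auto
            have "2 powr real_of_int L < 2 powr (real_of_int k + 1)" using tL k by linarith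
            then have kL: "L \<le> k" by simp
            have "2 powr real_of_int k < 2 powr (real_of_int U + 1)" using tU k by linarith
            then have kU: "k \<le> U" by simp
            have "m t \<le> a k" unfolding a_def m_def
              by (rule m_mono[OF fc supp]) (use k in auto)
            then have "m t powr \<theta> \<le> a k powr \<theta>" using m0 \<theta> by (intro powr_mono2) auto
            then have "J t \<le> ennreal (a k powr \<theta>) * indicator {2 powr real_of_int k<..2 powr (real_of_int k + 1)} t"
              using k Jt[OF tpos] by (simp add: ennreal_leI)
            also have "\<dots> \<le> (\<Sum>k\<in>{L..U}. ennreal (a k powr \<theta>) * indicator {2 powr real_of_int k<..2 powr (real_of_int k + 1)} t)"
              by (rule member_le_sum) (use kL kU in auto)
            finally show ?thesis by (rule add_increasing[OF zero_le])
          qed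
        qed
      qed
      have main: "(\<integral>\<^sup>+ t. J t \<partial>interval_measure F)
          \<le> ennreal (2 powr p * K * Br + Vs powr \<theta> * 2 powr (real_of_int U * p) * (2 powr (-p)) ^ j)" for j :: nat
      proof -
        define L where "L = U - int j"
        have LU: "L \<le> U" unfolding L_def by simp
        have "(\<integral>\<^sup>+ t. J t \<partial>interval_measure F)
           \<le> (\<integral>\<^sup>+ t. ennreal (Vs powr \<theta>) * indicator {0<..2 powr real_of_int L} t
               + (\<Sum>k\<in>{L..U}. ennreal (a k powr \<theta>) * indicator {2 powr real_of_int k<..2 powr (real_of_int k + 1)} t) \<partial>interval_measure F)"
          by (intro nn_integral_mono pt[OF LU])
        also have "\<dots> = ennreal (Vs powr \<theta>) * emeasure (interval_measure F) {0<..2 powr real_of_int L}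
            + (\<Sum>k\<in>{L..U}. ennreal (a k powr \<theta>) * emeasure (interval_measure F) {2 powr real_of_int k<..2 powr (real_of_int k + 1)})"
        proof -
          let ?g1 = "\<lambda>t. ennreal (Vs powr \<theta>) * indicator {0<..2 powr real_of_int L} t"
          let ?h = "\<lambda>k t. ennreal (a k powr \<theta>) * indicator {2 powr real_of_int k<..2 powr (real_of_int k + 1)} t"
          have mh: "?h k \<in> borel_measurable (interval_measure F)" for k
            by (intro borel_measurable_times_ennreal borel_measurable_const borel_measurable_indicator) simp
          have m1: "?g1 \<in> borel_measurable (interval_measure F)"
            by (intro borel_measurable_times_ennreal borel_measurable_const borel_measurable_indicator) simp
          have m2: "(\<lambda>t. \<Sum>k\<in>{L..U}. ?h k t) \<in> borel_measurable (interval_measure F)"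
            using mh by (rule borel_measurable_sum)
          have e1: "(\<integral>\<^sup>+ t. ?g1 t \<partial>interval_measure F) = ennreal (Vs powr \<theta>) * emeasure (interval_measure F) {0<..2 powr real_of_int L}"
            by (rule nn_integral_cmult_indicator) simp
          have e2: "(\<integral>\<^sup>+ t. (\<Sum>k\<in>{L..U}. ?h k t) \<partial>interval_measure F) = (\<Sum>k\<in>{L..U}. \<integral>\<^sup>+ t. ?h k t \<partial>interval_measure F)"
            by (rule nn_integral_sum) (rule mh)
          have e3: "(\<integral>\<^sup>+ t. ?h k t \<partial>interval_measure F) = ennreal (a k powr \<theta>) * emeasure (interval_measure F) {2 powr real_of_int k<..2 powr (real_of_int k + 1)}" for k
            by (rule nn_integral_cmult_indicator) simp
          show ?thesis unfolding nn_integral_add[OF m1 m2] e1 e2 e3 ..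
        qed
        also have "\<dots> = ennreal (Vs powr \<theta> * 2 powr (real_of_int L * p))
            + (\<Sum>k\<in>{L..U}. ennreal (a k powr \<theta> * (2 powr ((real_of_int k + 1) * p) - 2 powr (real_of_int k * p))))"
        proof -
          have "emeasure (interval_measure F) {0<..2 powr real_of_int L} = ennreal (2 powr (real_of_int L * p))"
            using muI[of 0 "2 powr real_of_int L"] F0 F2 by simp
          moreover have "emeasure (interval_measure F) {2 powr real_of_int k<..2 powr (real_of_int k + 1)}
              = ennreal (2 powr ((real_of_int k + 1) * p) - 2 powr (real_of_int k * p))" for k
            using muI[of "2 powr real_of_int k" "2 powr (real_of_int k + 1)"] F2 by simp
          moreover have dnn: "0 \<le> 2 powr ((real_of_int k + 1) * p) - 2 powr (real_of_int k * p)" for k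
          proof -
            have "2 powr (real_of_int k * p) \<le> 2 powr ((real_of_int k + 1) * p)" using p0 by (intro powr_mono) auto
            then show ?thesis by simp
          qed
          ultimately show ?thesis by (simp add: ennreal_mult)
        qed
        also have "\<dots> \<le> ennreal (Vs powr \<theta> * 2 powr (real_of_int L * p))
            + ennreal (2 powr p * (\<Sum>k\<in>{L..U}. 2 powr (real_of_int k * p) * a k powr \<theta>))"
        proof -
          have "(\<Sum>k\<in>{L..U}. ennreal (a k powr \<theta> * (2 powr ((real_of_int k + 1) * p) - 2 powr (real_of_int k * p))))
              \<le> (\<Sum>k\<in>{L..U}. ennreal (2 powr p * (2 powr (real_of_int k * p) * a k powr \<theta>)))"
          proof (intro sum_mono ennreal_leI)
            fix k
            have "2 powr ((real_of_int k + 1) * p) = 2 powr p * 2 powr (real_of_int k * p)"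
              by (simp add: powr_add[symmetric] algebra_simps)
            then have "2 powr ((real_of_int k + 1) * p) - 2 powr (real_of_int k * p) \<le> 2 powr p * 2 powr (real_of_int k * p)"
              by simp
            then show "a k powr \<theta> * (2 powr ((real_of_int k + 1) * p) - 2 powr (real_of_int k * p))
                \<le> 2 powr p * (2 powr (real_of_int k * p) * a k powr \<theta>)"
              by (rule order.trans[OF mult_left_mono[of _ _ "a k powr \<theta>"]]) (simp_all only: ac_simps order.refl powr_ge_zero)
          qed
          also have "\<dots> = ennreal (\<Sum>k\<in>{L..U}. 2 powr p * (2 powr (real_of_int k * p) * a k powr \<theta>))"
            by (rule sum_ennreal) simp
          finally show ?thesis by (simp add: sum_distrib_left add_left_mono)
        qed
        also have "(\<Sum>k\<in>{L..U}. 2 powr (real_of_int k * p) * a k powr \<theta>) \<le> K * Br"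
          using Kc[of f Br L U] fc supp Bf Br unfolding a_def m_def \<theta>_def by simp
        then have "ennreal (2 powr p * (\<Sum>k\<in>{L..U}. 2 powr (real_of_int k * p) * a k powr \<theta>)) \<le> ennreal (2 powr p * (K * Br))"
          by (intro ennreal_leI mult_left_mono) auto
        finally have X: "(\<integral>\<^sup>+ t. J t \<partial>interval_measure F)
            \<le> ennreal (Vs powr \<theta> * 2 powr (real_of_int L * p)) + ennreal (2 powr p * (K * Br))"
          by (auto intro: add_left_mono)
        have "2 powr (real_of_int L * p) = 2 powr (real_of_int U * p) * (2 powr (-p)) ^ j"
          unfolding L_def by (simp add: powr_add[symmetric] powr_realpow[symmetric] powr_powr algebra_simps)
        then show ?thesis using X Br K by (simp add: ennreal_plus[symmetric] del: ennreal_plus) (simp add: algebra_simps)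
      qed
      have "(\<integral>\<^sup>+ t. J t \<partial>interval_measure F) \<le> ennreal (2 powr p * K * Br)"
      proof (rule le_lim_geom_enn[OF _ _ _ main])
        show "0 \<le> (2::real) powr (-p)" by simp
        have "(2::real) powr (-p) < 2 powr 0" using p0 by (intro powr_less_mono) auto
        then show "(2::real) powr (-p) < 1" by simp
        show "0 \<le> Vs powr \<theta> * 2 powr (real_of_int U * p)" by simp
        show "0 \<le> 2 powr p * K * Br" using K Br by simp
      qed
      then show ?thesis
        unfolding \<theta>eq J_def[symmetric] F_def[symmetric] Bf using K Br by (simp add: ennreal_mult)
    qed
  qed
qed

lemma S2_core:
  fixes p \<beta> :: real
  defines "n \<equiv> real DIM('a::euclidean_space)"
  assumes p: "p \<ge> 1" and \<beta>: "\<beta> > 0" and sn: "\<beta> * p < n"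
  shows "\<exists>C>0. \<forall>f::'a \<Rightarrow> real. f \<in> C0inf \<longrightarrow>
     ennpow (\<integral>\<^sup>+ x. ennreal (\<bar>f x\<bar> powr (n * p / (n - p * \<beta>))) \<partial>lborel) ((n - p * \<beta>) / (n * p))
       \<le> ennreal C * ennpow (Bes p \<beta> f) (1/p)"
proof -
  obtain K where K: "K > 0" and Kc: "\<And>(f::'a \<Rightarrow> real) Br L U. continuous_on UNIV f \<and> compact (closure {x. f x \<noteq> 0})
     \<and> Bes p \<beta> f = ennreal Br \<and> Br \<ge> 0 \<Longrightarrow>
     (\<Sum>k\<in>{L..U::int}. 2 powr (real_of_int k * p) * (measure lborel {x. 2 powr (real_of_int k) < \<bar>f x\<bar>}) powr (1 - \<beta>*p/n)) \<le> K * Br"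
    using core[OF p \<beta> sn[unfolded n_def]] unfolding n_def by blast
  have n: "n > 0" unfolding n_def by simp
  define \<theta> where "\<theta> = 1 - \<beta>*p/n"
  have \<theta>: "\<theta> > 0" "\<theta> \<le> 1" unfolding \<theta>_def using sn n \<beta> p by (simp_all add: field_simps)
  define q where "q = p / \<theta>"
  have p0: "p > 0" using p by simp
  have q: "q > 0" unfolding q_def using p0 \<theta> by simp
  have qeq: "n * p / (n - p * \<beta>) = q" unfolding q_def \<theta>_def using n sn by (simp add: field_simps)
  have aeq: "(n - p * \<beta>) / (n * p) = \<theta> / p" unfolding \<theta>_def using n p0 by (simp add: field_simps)
  define c where "c = 2 powr q * K powr (1/\<theta>)"
  have c: "c > 0" unfolding c_def using K by simp
  show ?thesis
  proof (intro exI[of _ "c powr (\<theta>/p)"] conjI allI impI)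
    show "c powr (\<theta>/p) > 0" using c by simp
    fix f :: "'a \<Rightarrow> real" assume fC: "f \<in> C0inf"
    have fc: "continuous_on UNIV f" and supp: "compact (closure {x. f x \<noteq> 0})"
      using C0inf_props[OF fC] by auto
    obtain U :: int where U: "\<And>x. \<bar>f x\<bar> \<le> 2 powr U" using C0inf_props(3)[OF fC] by blast
    have fm[measurable]: "f \<in> borel_measurable borel" by (rule borel_measurable_continuous_onI[OF fc])
    show "ennpow (\<integral>\<^sup>+ x. ennreal (\<bar>f x\<bar> powr (n * p / (n - p * \<beta>))) \<partial>lborel) ((n - p * \<beta>) / (n * p))
       \<le> ennreal (c powr (\<theta>/p)) * ennpow (Bes p \<beta> f) (1/p)"
    proof (cases "Bes p \<beta> f = \<infinity>")
      case True
      then show ?thesis using c by (simp add: ennpow_def ennreal_mult_top)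
    next
      case False
      define Br where "Br = enn2real (Bes p \<beta> f)"
      have Bf: "Bes p \<beta> f = ennreal Br" and Br: "Br \<ge> 0"
        unfolding Br_def using False by (auto simp: ennreal_enn2real less_top)
      define A where "A k = {x. 2 powr real_of_int k < \<bar>f x\<bar>}" for k :: int
      define S0 where "S0 = closure {x. f x \<noteq> 0}"
      define a where "a k = measure lborel (A k)" for k :: int
      define Vs where "Vs = measure lborel S0"
      have a0: "a k \<ge> 0" for k unfolding a_def by simp
      have Am: "A k \<in> sets lborel" for k unfolding A_def by simp
      have S0m: "S0 \<in> sets lborel" unfolding S0_def by simp
      have eA: "emeasure lborel (A k) = ennreal (a k)" for k
        unfolding A_def a_def by (rule level_sets(2)[OF fc supp]) simp
      have eS: "emeasure lborel S0 = ennreal Vs"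
        unfolding S0_def Vs_def by (rule level_sets(4)[OF fc supp, of 0]) simp
      have pt: "ennreal (\<bar>f x\<bar> powr q) \<le> ennreal (2 powr (real_of_int L * q)) * indicator S0 x
          + (\<Sum>k\<in>{L..U}. ennreal (2 powr ((real_of_int k + 1) * q)) * indicator (A k) x)"
        if LU: "L \<le> U" for x L
      proof (cases "f x = 0")
        case True then show ?thesis by simp
      next
        case fx: False
        have xS: "x \<in> S0" unfolding S0_def using fx by (intro subsetD[OF closure_subset]) simp
        have tpos: "\<bar>f x\<bar> > 0" using fx by simp
        show ?thesis
        proof (cases "\<bar>f x\<bar> \<le> 2 powr real_of_int L")
          case True
          have "\<bar>f x\<bar> powr q \<le> (2 powr real_of_int L) powr q" using True q by (intro powr_mono2) auto
          then have "ennreal (\<bar>f x\<bar> powr q) \<le> ennreal (2 powr (real_of_int L * q)) * indicator S0 x"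
            using xS by (simp add: powr_powr ennreal_leI)
          then show ?thesis by (rule add_increasing2[OF zero_le])
        next
          case tL: False
          obtain k :: int where k: "2 powr real_of_int k < \<bar>f x\<bar>" "\<bar>f x\<bar> \<le> 2 powr (real_of_int k + 1)"
            using exists_dyadic[OF tpos] by auto
          have "2 powr real_of_int L < 2 powr (real_of_int k + 1)" using tL k by linarith
          then have kL: "L \<le> k" by simp
          have "2 powr real_of_int k < 2 powr (real_of_int U)" using U[of x] k by linarith
          then have kU: "k \<le> U" by simp
          have xA: "x \<in> A k" unfolding A_def using k by simp
          have "\<bar>f x\<bar> powr q \<le> (2 powr (real_of_int k + 1)) powr q" using k q by (intro powr_mono2) auto
          then have "ennreal (\<bar>f x\<bar> powr q) \<le> ennreal (2 powr ((real_of_int k + 1) * q)) * indicator (A k) x"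
            using xA by (simp add: powr_powr ennreal_leI)
          also have "\<dots> \<le> (\<Sum>k\<in>{L..U}. ennreal (2 powr ((real_of_int k + 1) * q)) * indicator (A k) x)"
            by (rule member_le_sum) (use kL kU in auto)
          finally show ?thesis by (rule add_increasing[OF zero_le])
        qed
      qed
      have main: "(\<integral>\<^sup>+ x. ennreal (\<bar>f x\<bar> powr q) \<partial>lborel)
          \<le> ennreal (c * Br powr (1/\<theta>) + Vs * 2 powr (real_of_int U * q) * (2 powr (-q)) ^ j)" for j :: nat
      proof -
        define L where "L = U - int j"
        have LU: "L \<le> U" unfolding L_def by simp
        let ?g1 = "\<lambda>x. ennreal (2 powr (real_of_int L * q)) * indicator S0 x"
        let ?h = "\<lambda>k x. ennreal (2 powr ((real_of_int k + 1) * q)) * indicator (A k) x"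
        have mh: "?h k \<in> borel_measurable lborel" for k
          using Am by (intro borel_measurable_times_ennreal borel_measurable_const borel_measurable_indicator) auto
        have m1: "?g1 \<in> borel_measurable lborel"
          using S0m by (intro borel_measurable_times_ennreal borel_measurable_const borel_measurable_indicator) auto
        have m2: "(\<lambda>x. \<Sum>k\<in>{L..U}. ?h k x) \<in> borel_measurable lborel"
          using mh by (rule borel_measurable_sum)
        have "(\<integral>\<^sup>+ x. ennreal (\<bar>f x\<bar> powr q) \<partial>lborel) \<le> (\<integral>\<^sup>+ x. ?g1 x + (\<Sum>k\<in>{L..U}. ?h k x) \<partial>lborel)"
          by (intro nn_integral_mono pt[OF LU])
        also have "\<dots> = ennreal (2 powr (real_of_int L * q)) * ennreal Vs + (\<Sum>k\<in>{L..U}. ennreal (2 powr ((real_of_int k + 1) * q)) * ennreal (a k))"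
        proof -
          have e1: "(\<integral>\<^sup>+ x. ?g1 x \<partial>lborel) = ennreal (2 powr (real_of_int L * q)) * ennreal Vs"
            using nn_integral_cmult_indicator[OF S0m] eS by simp
          have e2: "(\<integral>\<^sup>+ x. (\<Sum>k\<in>{L..U}. ?h k x) \<partial>lborel) = (\<Sum>k\<in>{L..U}. \<integral>\<^sup>+ x. ?h k x \<partial>lborel)"
            by (rule nn_integral_sum) (rule mh)
          have e3: "(\<integral>\<^sup>+ x. ?h k x \<partial>lborel) = ennreal (2 powr ((real_of_int k + 1) * q)) * ennreal (a k)" for k
            using nn_integral_cmult_indicator[OF Am] eA by simp
          show ?thesis unfolding nn_integral_add[OF m1 m2] e1 e2 e3 ..
        qed
        also have "\<dots> = ennreal (2 powr (real_of_int L * q) * Vs + 2 powr q * (\<Sum>k\<in>{L..U}. (2 powr (real_of_int k * p) * a k powr \<theta>) powr (1/\<theta>)))"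
        proof -
          have t: "2 powr ((real_of_int k + 1) * q) * a k = 2 powr q * (2 powr (real_of_int k * p) * a k powr \<theta>) powr (1/\<theta>)" for k
          proof -
            have "(2 powr (real_of_int k * p) * a k powr \<theta>) powr (1/\<theta>) = 2 powr (real_of_int k * q) * a k"
              using a0[of k] \<theta> unfolding q_def by (simp add: powr_mult powr_powr)
            moreover have "2 powr ((real_of_int k + 1) * q) = 2 powr q * 2 powr (real_of_int k * q)"
              by (simp add: powr_add[symmetric] algebra_simps)
            ultimately show ?thesis by simp
          qed
          have "(\<Sum>k\<in>{L..U}. ennreal (2 powr ((real_of_int k + 1) * q)) * ennreal (a k))
              = (\<Sum>k\<in>{L..U}. ennreal (2 powr ((real_of_int k + 1) * q) * a k))"
            by (intro sum.cong refl) (simp add: ennreal_mult a0)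
          also have "\<dots> = ennreal (\<Sum>k\<in>{L..U}. 2 powr ((real_of_int k + 1) * q) * a k)"
            by (rule sum_ennreal) (simp add: a0)
          also have "\<dots> = ennreal (2 powr q * (\<Sum>k\<in>{L..U}. (2 powr (real_of_int k * p) * a k powr \<theta>) powr (1/\<theta>)))"
            by (simp add: t sum_distrib_left)
          moreover have Vs0: "Vs \<ge> 0" unfolding Vs_def by simp
          moreover have snn: "0 \<le> (\<Sum>k\<in>{L..U}. (2 powr (real_of_int k * p) * a k powr \<theta>) powr (1/\<theta>))"
            by (intro sum_nonneg) simp
          ultimately show ?thesis by (simp add: ennreal_mult ennreal_plus)
        qed
        also have "\<dots> \<le> ennreal (2 powr (real_of_int L * q) * Vs + c * Br powr (1/\<theta>))"
        proof (intro ennreal_leI add_left_mono)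
          have "(\<Sum>k\<in>{L..U}. (2 powr (real_of_int k * p) * a k powr \<theta>) powr (1/\<theta>))
              \<le> (\<Sum>k\<in>{L..U}. 2 powr (real_of_int k * p) * a k powr \<theta>) powr (1/\<theta>)"
            using \<theta> by (intro sum_powr_le) auto
          also have "\<dots> \<le> (K * Br) powr (1/\<theta>)"
          proof (intro powr_mono2)
            show "(\<Sum>k\<in>{L..U}. 2 powr (real_of_int k * p) * a k powr \<theta>) \<le> K * Br"
              using Kc[of f Br L U] fc supp Bf Br unfolding a_def A_def \<theta>_def by simp
          qed (use \<theta> in \<open>auto intro: sum_nonneg\<close>)
          also have "\<dots> = K powr (1/\<theta>) * Br powr (1/\<theta>)" using K Br by (simp add: powr_mult)
          finally show "2 powr q * (\<Sum>k\<in>{L..U}. (2 powr (real_of_int k * p) * a k powr \<theta>) powr (1/\<theta>)) \<le> c * Br powr (1/\<theta>)"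
            unfolding c_def by (simp add: mult.assoc mult_left_mono)
        qed
        also have "2 powr (real_of_int L * q) = 2 powr (real_of_int U * q) * (2 powr (-q)) ^ j"
          unfolding L_def by (simp add: powr_add[symmetric] powr_realpow[symmetric] powr_powr algebra_simps)
        finally show ?thesis by (simp add: algebra_simps)
      qed
      have I: "(\<integral>\<^sup>+ x. ennreal (\<bar>f x\<bar> powr q) \<partial>lborel) \<le> ennreal (c * Br powr (1/\<theta>))"
      proof (rule le_lim_geom_enn[OF _ _ _ main])
        show "0 \<le> (2::real) powr (-q)" by simp
        have "(2::real) powr (-q) < 2 powr 0" using q by (intro powr_less_mono) auto
        then show "(2::real) powr (-q) < 1" by simp
        show "0 \<le> Vs * 2 powr (real_of_int U * q)" unfolding Vs_def by simp
        show "0 \<le> c * Br powr (1/\<theta>)" using c by simp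
      qed
      have "ennpow (\<integral>\<^sup>+ x. ennreal (\<bar>f x\<bar> powr q) \<partial>lborel) (\<theta>/p) \<le> ennreal (c powr (\<theta>/p)) * ennpow (ennreal Br) (\<theta>/p * (1/\<theta>))"
        by (rule pow_step[OF I c Br]) (use \<theta> p0 in simp)
      moreover have "\<theta>/p * (1/\<theta>) = 1/p" using \<theta> by simp
      ultimately show ?thesis unfolding qeq aeq Bf by simp
    qed
  qed
qed

lemma S3_core:
  fixes p \<beta> :: real
  defines "n \<equiv> real DIM('a::euclidean_space)"
  assumes p: "p \<ge> 1" and \<beta>: "\<beta> > 0" and sn: "\<beta> * p < n"
  shows "\<exists>C>0. \<forall>f::'a \<Rightarrow> real. f \<in> C0inf \<longrightarrow>
     ennpow (\<integral>\<^sup>+ x. ennreal (\<bar>f x\<bar> powr p / norm x powr (p * \<beta>)) \<partial>lborel) (1/p)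
       \<le> ennreal C * ennpow (Bes p \<beta> f) (1/p)"
proof -
  obtain K where K: "K > 0" and Kc: "\<And>(f::'a \<Rightarrow> real) Br L U. continuous_on UNIV f \<and> compact (closure {x. f x \<noteq> 0})
     \<and> Bes p \<beta> f = ennreal Br \<and> Br \<ge> 0 \<Longrightarrow>
     (\<Sum>k\<in>{L..U::int}. 2 powr (real_of_int k * p) * (measure lborel {x. 2 powr (real_of_int k) < \<bar>f x\<bar>}) powr (1 - \<beta>*p/n)) \<le> K * Br"
    using core[OF p \<beta> sn[unfolded n_def]] unfolding n_def by blast
  have n: "n > 0" unfolding n_def by simp
  define s where "s = \<beta> * p"
  have p0: "p > 0" using p by simp
  have s: "0 < s" "s < n" unfolding s_def using sn \<beta> p0 by auto
  define \<theta> where "\<theta> = 1 - \<beta>*p/n"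
  define om where "om = unit_ball_vol n"
  have om: "om > 0" unfolding om_def n_def by simp
  define K7 where "K7 = om * 2 powr s / (1 - 2 powr (s-n)) * om powr (-(n-s)/n) + om powr (s/n)"
  have K7: "K7 > 0"
  proof -
    have "(2::real) powr (s-n) < 2 powr 0" using s by (intro powr_less_mono) auto
    then show ?thesis unfolding K7_def using om by (simp add: add_nonneg_pos)
  qed
  have riesz: "(\<integral>\<^sup>+ x. indicator E x * ennreal (norm x powr (-s)) \<partial>lborel) \<le> ennreal (K7 * v powr \<theta>)"
    if "E \<in> sets lborel" "emeasure lborel E = ennreal v" "v \<ge> 0" for E :: "'a set" and v
    using riesz_upper[OF s[unfolded n_def] that] unfolding K7_def om_def \<theta>_def s_def n_def by simp
  define c where "c = 2 powr p * K7 * K"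
  have c: "c > 0" unfolding c_def using K K7 by simp
  show ?thesis
  proof (intro exI[of _ "c powr (1/p)"] conjI allI impI)
    show "c powr (1/p) > 0" using c by simp
    fix f :: "'a \<Rightarrow> real" assume fC: "f \<in> C0inf"
    have fc: "continuous_on UNIV f" and supp: "compact (closure {x. f x \<noteq> 0})"
      using C0inf_props[OF fC] by auto
    obtain U :: int where U: "\<And>x. \<bar>f x\<bar> \<le> 2 powr U" using C0inf_props(3)[OF fC] by blast
    have fm[measurable]: "f \<in> borel_measurable borel" by (rule borel_measurable_continuous_onI[OF fc])
    show "ennpow (\<integral>\<^sup>+ x. ennreal (\<bar>f x\<bar> powr p / norm x powr (p * \<beta>)) \<partial>lborel) (1/p)
       \<le> ennreal (c powr (1/p)) * ennpow (Bes p \<beta> f) (1/p)"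
    proof (cases "Bes p \<beta> f = \<infinity>")
      case True
      then show ?thesis using c by (simp add: ennpow_def ennreal_mult_top)
    next
      case False
      define Br where "Br = enn2real (Bes p \<beta> f)"
      have Bf: "Bes p \<beta> f = ennreal Br" and Br: "Br \<ge> 0"
        unfolding Br_def using False by (auto simp: ennreal_enn2real less_top)
      define A where "A k = {x. 2 powr real_of_int k < \<bar>f x\<bar>}" for k :: int
      define S0 where "S0 = closure {x. f x \<noteq> 0}"
      define a where "a k = measure lborel (A k)" for k :: int
      define Vs where "Vs = measure lborel S0"
      have a0: "a k \<ge> 0" for k unfolding a_def by simp
      have Vs0: "Vs \<ge> 0" unfolding Vs_def by simp
      have Am: "A k \<in> sets lborel" for k unfolding A_def by simp
      have S0m: "S0 \<in> sets lborel" unfolding S0_def by simp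
      have eA: "emeasure lborel (A k) = ennreal (a k)" for k
        unfolding A_def a_def by (rule level_sets(2)[OF fc supp]) simp
      have eS: "emeasure lborel S0 = ennreal Vs"
        unfolding S0_def Vs_def by (rule level_sets(4)[OF fc supp, of 0]) simp
      define w where "w x = norm x powr (-s)" for x :: 'a
      have w0: "w x \<ge> 0" for x unfolding w_def by simp
      have wm: "(\<lambda>x. ennreal (w x)) \<in> borel_measurable lborel" unfolding w_def by measurable
      have integrand: "\<bar>f x\<bar> powr p / norm x powr (p * \<beta>) = \<bar>f x\<bar> powr p * w x" for x
        unfolding w_def s_def by (simp add: powr_minus_divide mult.commute)
      have pt: "ennreal (\<bar>f x\<bar> powr p * w x) \<le> ennreal (2 powr (real_of_int L * p)) * (indicator S0 x * ennreal (w x))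
          + (\<Sum>k\<in>{L..U}. ennreal (2 powr ((real_of_int k + 1) * p)) * (indicator (A k) x * ennreal (w x)))"
        if LU: "L \<le> U" for x L
      proof (cases "f x = 0")
        case True then show ?thesis using p0 by simp
      next
        case fx: False
        have xS: "x \<in> S0" unfolding S0_def using fx by (intro subsetD[OF closure_subset]) simp
        have tpos: "\<bar>f x\<bar> > 0" using fx by simp
        show ?thesis
        proof (cases "\<bar>f x\<bar> \<le> 2 powr real_of_int L")
          case True
          have "\<bar>f x\<bar> powr p \<le> (2 powr real_of_int L) powr p" using True p0 by (intro powr_mono2) auto
          then have "\<bar>f x\<bar> powr p * w x \<le> 2 powr (real_of_int L * p) * w x"
            using w0[of x] by (simp add: powr_powr mult_right_mono)
          then have "ennreal (\<bar>f x\<bar> powr p * w x) \<le> ennreal (2 powr (real_of_int L * p)) * (indicator S0 x * ennreal (w x))"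
            using xS w0[of x] by (simp add: ennreal_mult[symmetric] ennreal_leI)
          then show ?thesis by (rule add_increasing2[OF zero_le])
        next
          case tL: False
          obtain k :: int where k: "2 powr real_of_int k < \<bar>f x\<bar>" "\<bar>f x\<bar> \<le> 2 powr (real_of_int k + 1)"
            using exists_dyadic[OF tpos] by auto
          have "2 powr real_of_int L < 2 powr (real_of_int k + 1)" using tL k by linarith
          then have kL: "L \<le> k" by simp
          have "2 powr real_of_int k < 2 powr (real_of_int U)" using U[of x] k by linarith
          then have kU: "k \<le> U" by simp
          have xA: "x \<in> A k" unfolding A_def using k by simp
          have "\<bar>f x\<bar> powr p \<le> (2 powr (real_of_int k + 1)) powr p" using k p0 by (intro powr_mono2) auto
          then have "\<bar>f x\<bar> powr p * w x \<le> 2 powr ((real_of_int k + 1) * p) * w x"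
            using w0[of x] by (simp add: powr_powr mult_right_mono)
          then have "ennreal (\<bar>f x\<bar> powr p * w x) \<le> ennreal (2 powr ((real_of_int k + 1) * p)) * (indicator (A k) x * ennreal (w x))"
            using xA w0[of x] by (simp add: ennreal_mult[symmetric] ennreal_leI)
          also have "\<dots> \<le> (\<Sum>k\<in>{L..U}. ennreal (2 powr ((real_of_int k + 1) * p)) * (indicator (A k) x * ennreal (w x)))"
            by (rule member_le_sum) (use kL kU in auto)
          finally show ?thesis by (rule add_increasing[OF zero_le])
        qed
      qed
      have main: "(\<integral>\<^sup>+ x. ennreal (\<bar>f x\<bar> powr p * w x) \<partial>lborel)
          \<le> ennreal (c * Br powr 1 + K7 * Vs powr \<theta> * 2 powr (real_of_int U * p) * (2 powr (-p)) ^ j)" for j :: nat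
      proof -
        define L where "L = U - int j"
        have LU: "L \<le> U" unfolding L_def by simp
        let ?g1 = "\<lambda>x. ennreal (2 powr (real_of_int L * p)) * (indicator S0 x * ennreal (w x))"
        let ?h = "\<lambda>k x. ennreal (2 powr ((real_of_int k + 1) * p)) * (indicator (A k) x * ennreal (w x))"
        have mh: "?h k \<in> borel_measurable lborel" for k
          using Am wm by (intro borel_measurable_times_ennreal borel_measurable_const borel_measurable_indicator) auto
        have m1: "?g1 \<in> borel_measurable lborel"
          using S0m wm by (intro borel_measurable_times_ennreal borel_measurable_const borel_measurable_indicator) auto
        have m2: "(\<lambda>x. \<Sum>k\<in>{L..U}. ?h k x) \<in> borel_measurable lborel"
          using mh by (rule borel_measurable_sum)
        have e2: "(\<integral>\<^sup>+ x. (\<Sum>k\<in>{L..U}. ?h k x) \<partial>lborel) = (\<Sum>k\<in>{L..U}. \<integral>\<^sup>+ x. ?h k x \<partial>lborel)"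
          by (rule nn_integral_sum) (rule mh)
        have b1: "(\<integral>\<^sup>+ x. ?g1 x \<partial>lborel) \<le> ennreal (2 powr (real_of_int L * p)) * ennreal (K7 * Vs powr \<theta>)"
        proof -
          have "(\<integral>\<^sup>+ x. ?g1 x \<partial>lborel) = ennreal (2 powr (real_of_int L * p)) * (\<integral>\<^sup>+ x. indicator S0 x * ennreal (w x) \<partial>lborel)"
            using S0m wm by (intro nn_integral_cmult) auto
          also have "\<dots> \<le> ennreal (2 powr (real_of_int L * p)) * ennreal (K7 * Vs powr \<theta>)"
            by (intro mult_left_mono riesz[OF S0m eS Vs0, folded w_def]) simp
          finally show ?thesis .
        qed
        have b2: "(\<integral>\<^sup>+ x. ?h k x \<partial>lborel) \<le> ennreal (2 powr ((real_of_int k + 1) * p)) * ennreal (K7 * a k powr \<theta>)" for k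
        proof -
          have "(\<integral>\<^sup>+ x. ?h k x \<partial>lborel) = ennreal (2 powr ((real_of_int k + 1) * p)) * (\<integral>\<^sup>+ x. indicator (A k) x * ennreal (w x) \<partial>lborel)"
            using Am wm by (intro nn_integral_cmult) auto
          also have "\<dots> \<le> ennreal (2 powr ((real_of_int k + 1) * p)) * ennreal (K7 * a k powr \<theta>)"
            by (intro mult_left_mono riesz[OF Am eA a0, folded w_def]) simp
          finally show ?thesis .
        qed
        have "(\<integral>\<^sup>+ x. ennreal (\<bar>f x\<bar> powr p * w x) \<partial>lborel) \<le> (\<integral>\<^sup>+ x. ?g1 x + (\<Sum>k\<in>{L..U}. ?h k x) \<partial>lborel)"
          by (intro nn_integral_mono pt[OF LU])
        also have "\<dots> = (\<integral>\<^sup>+ x. ?g1 x \<partial>lborel) + (\<Sum>k\<in>{L..U}. \<integral>\<^sup>+ x. ?h k x \<partial>lborel)"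
          unfolding nn_integral_add[OF m1 m2] e2 ..
        also have "\<dots> \<le> ennreal (2 powr (real_of_int L * p)) * ennreal (K7 * Vs powr \<theta>)
            + (\<Sum>k\<in>{L..U}. ennreal (2 powr ((real_of_int k + 1) * p)) * ennreal (K7 * a k powr \<theta>))"
          by (intro add_mono b1 sum_mono b2)
        also have "\<dots> = ennreal (2 powr (real_of_int L * p) * K7 * Vs powr \<theta>
            + 2 powr p * K7 * (\<Sum>k\<in>{L..U}. 2 powr (real_of_int k * p) * a k powr \<theta>))"
        proof -
          have t: "2 powr ((real_of_int k + 1) * p) * (K7 * a k powr \<theta>) = 2 powr p * K7 * (2 powr (real_of_int k * p) * a k powr \<theta>)" for k
          proof -
            have "2 powr ((real_of_int k + 1) * p) = 2 powr p * 2 powr (real_of_int k * p)"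
              by (simp add: powr_add[symmetric] algebra_simps)
            then show ?thesis by (simp add: ac_simps)
          qed
          have "(\<Sum>k\<in>{L..U}. ennreal (2 powr ((real_of_int k + 1) * p)) * ennreal (K7 * a k powr \<theta>))
              = (\<Sum>k\<in>{L..U}. ennreal (2 powr ((real_of_int k + 1) * p) * (K7 * a k powr \<theta>)))"
            using K7 by (intro sum.cong refl) (simp add: ennreal_mult)
          also have "\<dots> = ennreal (\<Sum>k\<in>{L..U}. 2 powr ((real_of_int k + 1) * p) * (K7 * a k powr \<theta>))"
            using K7 by (intro sum_ennreal) simp
          also have "\<dots> = ennreal (2 powr p * K7 * (\<Sum>k\<in>{L..U}. 2 powr (real_of_int k * p) * a k powr \<theta>))"
            by (simp add: t sum_distrib_left)
          finally have "(\<Sum>k\<in>{L..U}. ennreal (2 powr ((real_of_int k + 1) * p)) * ennreal (K7 * a k powr \<theta>))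
              = ennreal (2 powr p * K7 * (\<Sum>k\<in>{L..U}. 2 powr (real_of_int k * p) * a k powr \<theta>))" .
          moreover have "ennreal (2 powr (real_of_int L * p)) * ennreal (K7 * Vs powr \<theta>) = ennreal (2 powr (real_of_int L * p) * K7 * Vs powr \<theta>)"
            using K7 by (simp add: ennreal_mult mult.assoc)
          moreover have "0 \<le> 2 powr p * K7 * (\<Sum>k\<in>{L..U}. 2 powr (real_of_int k * p) * a k powr \<theta>)"
            using K7 by (intro mult_nonneg_nonneg sum_nonneg) auto
          moreover have "0 \<le> 2 powr (real_of_int L * p) * K7 * Vs powr \<theta>" using K7 by simp
          ultimately show ?thesis by (simp add: ennreal_plus)
        qed
        also have "\<dots> \<le> ennreal (2 powr (real_of_int L * p) * K7 * Vs powr \<theta> + 2 powr p * K7 * (K * Br))"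
        proof (intro ennreal_leI add_left_mono mult_left_mono)
          show "(\<Sum>k\<in>{L..U}. 2 powr (real_of_int k * p) * a k powr \<theta>) \<le> K * Br"
            using Kc[of f Br L U] fc supp Bf Br unfolding a_def A_def \<theta>_def by simp
        qed (use K7 in simp)
        also have "2 powr (real_of_int L * p) = 2 powr (real_of_int U * p) * (2 powr (-p)) ^ j"
          unfolding L_def by (simp add: powr_add[symmetric] powr_realpow[symmetric] powr_powr algebra_simps)
        finally show ?thesis using Br unfolding c_def by (simp add: algebra_simps)
      qed
      have I: "(\<integral>\<^sup>+ x. ennreal (\<bar>f x\<bar> powr p * w x) \<partial>lborel) \<le> ennreal (c * Br powr 1)"
      proof (rule le_lim_geom_enn[OF _ _ _ main])
        show "0 \<le> (2::real) powr (-p)" by simp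
        have "(2::real) powr (-p) < 2 powr 0" using p0 by (intro powr_less_mono) auto
        then show "(2::real) powr (-p) < 1" by simp
        show "0 \<le> K7 * Vs powr \<theta> * 2 powr (real_of_int U * p)" using K7 by simp
        show "0 \<le> c * Br powr 1" using c by simp
      qed
      have "ennpow (\<integral>\<^sup>+ x. ennreal (\<bar>f x\<bar> powr p * w x) \<partial>lborel) (1/p) \<le> ennreal (c powr (1/p)) * ennpow (ennreal Br) (1/p * 1)"
        by (rule pow_step[OF I c Br]) (use p0 in simp)
      then show ?thesis unfolding integrand Bf by simp
    qed
  qed
qed

lemma ennpow_mono:
  assumes "x \<le> y" "a > 0"
  shows "ennpow x a \<le> ennpow y a"
proof (cases "y = \<infinity>")
  case True then show ?thesis by (simp add: ennpow_def)
next
  case False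
  then have xf: "x \<noteq> \<infinity>" using assms(1) by (auto simp: top_unique)
  have "enn2real x \<le> enn2real y" using assms(1) False by (simp add: enn2real_mono less_top)
  then have "enn2real x powr a \<le> enn2real y powr a" using assms(2) by (intro powr_mono2) auto
  then show ?thesis using False xf by (simp add: ennpow_def ennreal_leI)
qed

lemma INF_scale:
  fixes X :: ennreal and c :: real
  assumes c: "c > 0" and h: "\<And>f. f \<in> A \<Longrightarrow> X \<le> ennreal c * g f"
  shows "X \<le> ennreal c * (INF f\<in>A. g f)"
proof -
  have inv: "ennreal (1/c) * (ennreal c * y) = y" for y
    using c by (simp add: mult.assoc[symmetric] ennreal_mult[symmetric])
  have "ennreal (1/c) * X \<le> g f" if "f \<in> A" for f
    using mult_left_mono[OF h[OF that], of "ennreal (1/c)"] inv by simp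
  then have "ennreal (1/c) * X \<le> (INF f\<in>A. g f)" by (rule INF_greatest)
  then have "ennreal c * (ennreal (1/c) * X) \<le> ennreal c * (INF f\<in>A. g f)" by (rule mult_left_mono) simp
  moreover have "ennreal c * (ennreal (1/c) * X) = X"
    using c by (simp add: mult.assoc[symmetric] ennreal_mult[symmetric])
  ultimately show ?thesis by simp
qed

lemma S4_core:
  fixes p \<beta> :: real
  defines "n \<equiv> real DIM('a::euclidean_space)"
  assumes p: "p \<ge> 1" and \<beta>: "\<beta> > 0" "\<beta> < 1" and sn: "\<beta> * p < n"
  shows "\<exists>C>0. \<forall>D :: 'a set. smooth_bounded_domain D \<longrightarrow>
      ennpow (emeasure lborel D) ((n - p * \<beta>) / n) \<le> ennreal C * besov_cap_compact p p \<beta> (closure D)"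
proof -
  obtain C1 where C1: "C1 > 0" and C1b: "\<And>f::'a \<Rightarrow> real. f \<in> C0inf \<Longrightarrow>
     (\<integral>\<^sup>+ t. indicator {0<..} t * ennpow (emeasure lborel (Ot t f)) ((n - p * \<beta>) / n)
        \<partial>(interval_measure (\<lambda>t. (max 0 t) powr p))) \<le> ennreal C1 * Bes p \<beta> f"
    using S1_core[OF p \<beta>(1) sn[unfolded n_def]] unfolding n_def by blast
  have n: "n > 0" unfolding n_def by simp
  have p0: "p > 0" using p by simp
  define \<theta> where "\<theta> = (n - p * \<beta>) / n"
  have \<theta>: "\<theta> > 0" unfolding \<theta>_def using n sn by (simp add: field_simps)
  define F where "F t = (max 0 t) powr p" for t :: real
  have Fmono: "F x \<le> F y" if "x \<le> y" for x y unfolding F_def by (rule F_props(1)[OF p0 that])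
  have Fcont: "continuous (at_right a) F" for a unfolding F_def[abs_def] by (rule F_props(2)[OF p0])
  have mu: "emeasure (interval_measure F) {0<..1/2} = ennreal (2 powr (-p))"
    using emeasure_interval_measure_Ioc[of 0 "1/2" F, OF _ Fmono Fcont] p0
    by (simp add: F_def powr_divide powr_minus_divide)
  show ?thesis
  proof (intro exI[of _ "C1 * 2 powr p"] conjI allI impI)
    show "C1 * 2 powr p > 0" using C1 by simp
    fix D :: "'a set" assume D: "smooth_bounded_domain D"
    show "ennpow (emeasure lborel D) ((n - p * \<beta>) / n) \<le> ennreal (C1 * 2 powr p) * besov_cap_compact p p \<beta> (closure D)"
      unfolding besov_cap_compact_def
    proof (rule INF_scale)
      show "C1 * 2 powr p > 0" using C1 by simp
      fix f assume "f \<in> {f \<in> C0inf. \<forall>x. indicator (closure D) x \<le> f x}"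
      then have fC: "f \<in> C0inf" and ge: "\<And>x. indicator (closure D) x \<le> f x" by auto
      have "D \<subseteq> Ot t f" if "t < 1" for t
      proof
        fix x assume "x \<in> D"
        then have "x \<in> closure D" using closure_subset by auto
        then have "1 \<le> f x" using ge[of x] by simp
        then show "x \<in> Ot t f" unfolding Ot_def using that by simp
      qed
      have fm[measurable]: "f \<in> borel_measurable borel"
        using C0inf_props(1)[OF fC] by (rule borel_measurable_continuous_onI)
      have pt: "ennpow (emeasure lborel D) \<theta> * indicator {0<..1/2} t
          \<le> indicator {0<..} t * ennpow (emeasure lborel (Ot t f)) \<theta>" for t
      proof (cases "t \<in> {0<..1/2}")
        case True
        then have "D \<subseteq> Ot t f" using \<open>\<And>t. t < 1 \<Longrightarrow> D \<subseteq> Ot t f\<close> by simp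
        then have "emeasure lborel D \<le> emeasure lborel (Ot t f)"
          by (rule emeasure_mono) (simp add: Ot_def)
        then have "ennpow (emeasure lborel D) \<theta> \<le> ennpow (emeasure lborel (Ot t f)) \<theta>"
          by (rule ennpow_mono[OF _ \<theta>])
        then show ?thesis using True by simp
      qed simp
      have "ennpow (emeasure lborel D) \<theta> * ennreal (2 powr (-p))
          = (\<integral>\<^sup>+ t. ennpow (emeasure lborel D) \<theta> * indicator {0<..1/2} t \<partial>interval_measure F)"
        by (subst nn_integral_cmult_indicator) (simp_all add: mu)
      also have "\<dots> \<le> (\<integral>\<^sup>+ t. indicator {0<..} t * ennpow (emeasure lborel (Ot t f)) \<theta> \<partial>interval_measure F)"
        by (intro nn_integral_mono pt)
      also have "\<dots> \<le> ennreal C1 * Bes p \<beta> f"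
        using C1b[OF fC] unfolding \<theta>_def F_def[abs_def] .
      also have "Bes p \<beta> f = ennpow (besov_norm p p \<beta> f) p"
        unfolding besov_eq[OF \<beta> p0] ennpow_inv[OF p0] ..
      finally have X: "ennpow (emeasure lborel D) \<theta> * ennreal (2 powr (-p)) \<le> ennreal C1 * ennpow (besov_norm p p \<beta> f) p" .
      have "ennpow (emeasure lborel D) \<theta> = ennpow (emeasure lborel D) \<theta> * ennreal (2 powr (-p)) * ennreal (2 powr p)"
      proof -
        have "ennreal (2 powr (-p)) * ennreal (2 powr p) = ennreal (2 powr (-p) * 2 powr p)" by (simp add: ennreal_mult)
        also have "2 powr (-p) * 2 powr p = (1::real)" by (simp add: powr_add[symmetric])
        finally show ?thesis by (simp add: mult.assoc)
      qed
      also have "\<dots> \<le> ennreal C1 * ennpow (besov_norm p p \<beta> f) p * ennreal (2 powr p)"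
        by (rule mult_right_mono[OF X]) simp
      also have "\<dots> = ennreal (C1 * 2 powr p) * ennpow (besov_norm p p \<beta> f) p"
        using C1 by (simp add: ennreal_mult ac_simps)
      finally show "ennpow (emeasure lborel D) ((n - p * \<beta>) / n) \<le> ennreal (C1 * 2 powr p) * ennpow (besov_norm p p \<beta> f) p"
        unfolding \<theta>_def .
    qed
  qed
qed

theorem theorem3p2:
  fixes \<beta> p :: real
  assumes "0 < \<beta>" "\<beta> < 1" "1 \<le> p" "p < real CARD('n) / \<beta>"
  defines "n \<equiv> real CARD('n)"
  defines "S1 \<equiv> (\<exists>C>0. \<forall>f \<in> (C0inf :: (real^'n \<Rightarrow> real) set).
      ennpow (\<integral>\<^sup>+ t. indicator {0<..} t * ennpow (emeasure lborel (Ot t f)) ((n - p * \<beta>) / n)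
                 \<partial>(interval_measure (\<lambda>t. (max 0 t) powr p))) (1 / p)
        \<le> ennreal C * besov_norm p p \<beta> f)"
  defines "S2 \<equiv> (\<exists>C>0. \<forall>f \<in> (C0inf :: (real^'n \<Rightarrow> real) set).
      ennpow (\<integral>\<^sup>+ x. ennreal (\<bar>f x\<bar> powr (n * p / (n - p * \<beta>))) \<partial>lborel) ((n - p * \<beta>) / (n * p))
        \<le> ennreal C * besov_norm p p \<beta> f)"
  defines "S3 \<equiv> (\<exists>C>0. \<forall>f \<in> (C0inf :: (real^'n \<Rightarrow> real) set).
      ennpow (\<integral>\<^sup>+ x. ennreal (\<bar>f x\<bar> powr p / norm x powr (p * \<beta>)) \<partial>lborel) (1 / p)
        \<le> ennreal C * besov_norm p p \<beta> f)"
  defines "S4 \<equiv> (\<exists>C>0. \<forall>D :: (real^'n) set. smooth_bounded_domain D \<longrightarrow>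
      ennpow (emeasure lborel D) ((n - p * \<beta>) / n)
        \<le> ennreal C * besov_cap_compact p p \<beta> (closure D))"
  shows "(S1 \<longleftrightarrow> S2) \<and> (S2 \<longleftrightarrow> S3) \<and> (S3 \<longleftrightarrow> S4) \<and> S1 \<and> S2 \<and> S3 \<and> S4"
proof -
  have \<beta>: "0 < \<beta>" "\<beta> < 1" using assms(1,2) .
  have p: "1 \<le> p" using assms(3) .
  have p0: "p > 0" using p by simp
  have dim: "real DIM(real^'n) = n" unfolding n_def by simp
  have sn: "\<beta> * p < real DIM(real^'n)"
  proof -
    have "p * \<beta> < real CARD('n)" using assms(4) \<beta> by (simp add: field_simps)
    then show ?thesis by (simp add: mult.commute)
  qed
  have besov: "besov_norm p p \<beta> f = ennpow (Bes p \<beta> f) (1/p)" for f :: "real^'n \<Rightarrow> real"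
    by (rule besov_eq[OF \<beta> p0])
  have s1: S1
  proof -
    obtain C1 where C1: "C1 > 0" and C1b: "\<And>f::real^'n \<Rightarrow> real. f \<in> C0inf \<Longrightarrow>
       (\<integral>\<^sup>+ t. indicator {0<..} t * ennpow (emeasure lborel (Ot t f)) ((n - p * \<beta>) / n)
          \<partial>(interval_measure (\<lambda>t. (max 0 t) powr p))) \<le> ennreal C1 * Bes p \<beta> f"
      using S1_core[OF p \<beta>(1) sn] unfolding dim by blast
    show ?thesis unfolding S1_def
    proof (intro exI[of _ "C1 powr (1/p)"] conjI ballI)
      show "C1 powr (1/p) > 0" using C1 by simp
      fix f :: "real^'n \<Rightarrow> real" assume fC: "f \<in> C0inf"
      show "ennpow (\<integral>\<^sup>+ t. indicator {0<..} t * ennpow (emeasure lborel (Ot t f)) ((n - p * \<beta>) / n)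
                 \<partial>(interval_measure (\<lambda>t. (max 0 t) powr p))) (1 / p)
          \<le> ennreal (C1 powr (1/p)) * besov_norm p p \<beta> f"
      proof (cases "Bes p \<beta> f = \<infinity>")
        case True
        then show ?thesis using C1 unfolding besov by (simp add: ennpow_def ennreal_mult_top)
      next
        case False
        define Br where "Br = enn2real (Bes p \<beta> f)"
        have Bf: "Bes p \<beta> f = ennreal Br" and Br: "Br \<ge> 0"
          unfolding Br_def using False by (auto simp: ennreal_enn2real less_top)
        have I: "(\<integral>\<^sup>+ t. indicator {0<..} t * ennpow (emeasure lborel (Ot t f)) ((n - p * \<beta>) / n)
            \<partial>(interval_measure (\<lambda>t. (max 0 t) powr p))) \<le> ennreal (C1 * Br powr 1)"
          using C1b[OF fC] Br C1 unfolding Bf by (simp add: ennreal_mult)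
        have "ennpow (\<integral>\<^sup>+ t. indicator {0<..} t * ennpow (emeasure lborel (Ot t f)) ((n - p * \<beta>) / n)
                 \<partial>(interval_measure (\<lambda>t. (max 0 t) powr p))) (1 / p)
            \<le> ennreal (C1 powr (1/p)) * ennpow (ennreal Br) (1/p * 1)"
          by (rule pow_step[OF I C1 Br]) (use p0 in simp)
        then show ?thesis unfolding besov Bf by simp
      qed
    qed
  qed
  have s2: S2
  proof -
    obtain C where C: "C > 0" and Cb: "\<And>f::real^'n \<Rightarrow> real. f \<in> C0inf \<Longrightarrow>
       ennpow (\<integral>\<^sup>+ x. ennreal (\<bar>f x\<bar> powr (n * p / (n - p * \<beta>))) \<partial>lborel) ((n - p * \<beta>) / (n * p))
       \<le> ennreal C * ennpow (Bes p \<beta> f) (1/p)"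
      using S2_core[OF p \<beta>(1) sn] unfolding dim by blast
    show ?thesis unfolding S2_def besov using C Cb by blast
  qed
  have s3: S3
  proof -
    obtain C where C: "C > 0" and Cb: "\<And>f::real^'n \<Rightarrow> real. f \<in> C0inf \<Longrightarrow>
       ennpow (\<integral>\<^sup>+ x. ennreal (\<bar>f x\<bar> powr p / norm x powr (p * \<beta>)) \<partial>lborel) (1/p)
       \<le> ennreal C * ennpow (Bes p \<beta> f) (1/p)"
      using S3_core[OF p \<beta>(1) sn] by blast
    show ?thesis unfolding S3_def besov using C Cb by blast
  qed
  have s4: S4
  proof -
    obtain C where C: "C > 0" and Cb: "\<And>D::(real^'n) set. smooth_bounded_domain D \<Longrightarrow>
       ennpow (emeasure lborel D) ((n - p * \<beta>) / n) \<le> ennreal C * besov_cap_compact p p \<beta> (closure D)"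
      using S4_core[OF p \<beta> sn] unfolding dim by blast
    show ?thesis unfolding S4_def using C Cb by blast
  qed
  show ?thesis using s1 s2 s3 s4 by blast
qed

end
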